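(* Let $0< m\le n$, $\ell:=n-m$, $G:=\begin{bmatrix}0_{\ell\times m}\\ I_m\end{bmatrix}$, $G^\perp:=[I_\ell\ \ 0_{\ell\times m}]$. Consider the mechanical system $$\begin{bmatrix}\dot{\mathbb q}\\ \dot{\mathbb p}\end{bmatrix}=\begin{bmatrix}0_{n\times n} & I_n\\ -I_n & -\mathbb D(\mathbb q,\mathbb p)\end{bmatrix}\begin{bmatrix}\nabla_{\mathbb q}\mathbb H\\ \nabla_{\mathbb p}\mathbb H\end{bmatrix}+\begin{bmatrix}0_{n\times m}\\ G\end{bmatrix}u,\quad \mathbb H(\mathbb q,\mathbb p)=\tfrac12\mathbb p^\top M^{-1}(\mathbb q)\mathbb p+\mathbb U(\mathbb q),\quad y=G^\top M^{-1}(\mathbb q)\mathbb p,$$ with $\mathbb q,\mathbb p\in\mathbb{R}^n$, $u,y\in\mathbb{R}^m$, $M(\mathbb q)\in\mathbb{R}^{n\times n}$ positive definite, $\mathbb D(\mathbb q,\mathbb p)\in\mathbb{R}^{n\times n}$ positive semi-definite, and $\mathbb U:\mathbb{R}^n\to\mathbb{R}_{\ge0}$. Let $q_\star\in\mathbb{R}^n$ satisfy $G^\perp\nabla\mathbb U(q_\star)=0_\ell$. Let $K_I\in\mathbb{R}^{m\times m}$ be positive definite, $K_P,K_D\in\mathbb{R}^{m\times m}$ positive semi-definite, $\kappa:=-G^\top q_\star-K_I^{-1}G^\top\nabla\mathbb U(q_\star)$, and apply the control $$u=-K_Py-K_I(G^\top\mathbb q+\kappa)-K_D\dot y.$$ Then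 the closed-loop system has a (Lyapunov) stable equilibrium point at $(q_\star,0_n)$ if $K_I$ satisfies $\nabla^2\mathbb U(q_\star)+GK_IG^\top>0$. Moreover, the closed-loop system takes the form $$\begin{bmatrix}\dot{\mathbb q}\\ \dot{\mathbb p}\end{bmatrix}=\mathbb F_d(\mathbb q,\mathbb p)\nabla\mathbb H_d(\mathbb q,\mathbb p),$$ where $$\mathbb F_d:=\begin{bmatrix}0_{n\times n} & M^{-1}M_d\\ -M_dM^{-1} & \mathbb J-\mathbb D_d\end{bmatrix},\quad \mathbb H_d(\mathbb q,\mathbb p):=\tfrac12\mathbb p^\top M_d^{-1}(\mathbb q)\mathbb p+\mathbb U_d(\mathbb q),$$ $$\mathbb U_d(\mathbb q)=\tfrac12(G^\top\mathbb q+\kappa)^\top K_I(G^\top\mathbb q+\kappa)+\mathbb U(\mathbb q),\quad M_d=M\,[M+GK_DG^\top]^{-1}M,$$ $$\mathbb J=\mathbb E^{-1}(\mathbb B^\top-\mathbb B)\mathbb E^{-\top},\quad \mathbb D_d=\mathbb E^{-1}(\mathbb D+GK_PG^\top)\mathbb E^{-\top},\quad \mathbb B(\mathbb q,\mathbb p):=GK_D\,\frac{\partial y}{\partial \mathbb q}(\mathbb q,\mathbb p),\quad \mathbb E(\mathbb q):=M(\mathbb q)M_d^{-1}(\mathbb q),$$ with $\frac{\partial y}{\partial\mathbb q}$ the $m\times n$ Jacobian of $y(\mathbb q,\mathbb p)=G^\top M^{-1}(\mathbb q)\mathbb p$ with respect to $\mathbb q$.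
   Context: All functions are at least twice continuously differentiable. $\nabla f$ denotes the (column) gradient, $\nabla^2 f$ the Hessian. A matrix $B$ is positive definite (semi-definite) if $B=B^\top$ and $x^\top Bx>0$ ($\ge0$) for all $x\ne0$ (all $x$). The control law contains $\dot y$, the time derivative of the output along the closed-loop trajectories. *)

theory Defs
  imports "HOL-Analysis.Analysis"
begin

text \<open>Vectors in R^n are \<open>real^'n\<close>; the index type carries a linear order so that
  "the last m coordinates" (used by G) makes sense. pos i is the 0-based position of i.\<close>

definition pos :: "'a::{finite,linorder} \<Rightarrow> nat" where
  "pos i = card {k. k < i}"

text \<open>G = [0_{l x m}; I_m] with l = n - m: column j is the standard basis vector of the
  (l + pos j)-th coordinate.\<close>
definition Gmat :: "real^'m::{finite,linorder}^'n::{finite,linorder}" where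
  "Gmat = (\<chi> i j. if pos i = CARD('n) - CARD('m) + pos j then 1 else 0)"

text \<open>G^perp v = 0_l, with G^perp = [I_l 0]: the first l coordinates of v vanish.\<close>
definition Gperp_zero :: "('m::{finite,linorder}) itself \<Rightarrow> real^'n::{finite,linorder} \<Rightarrow> bool" where
  "Gperp_zero _ v \<longleftrightarrow> (\<forall>i. pos i < CARD('n) - CARD('m) \<longrightarrow> v $ i = 0)"

definition pos_def :: "real^'n^'n \<Rightarrow> bool" where
  "pos_def A \<longleftrightarrow> transpose A = A \<and> (\<forall>x. x \<noteq> 0 \<longrightarrow> x \<bullet> (A *v x) > 0)"

definition psd :: "real^'n^'n \<Rightarrow> bool" where
  "psd A \<longleftrightarrow> transpose A = A \<and> (\<forall>x. x \<bullet> (A *v x) \<ge> 0)"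

definition C2 :: "('a::euclidean_space \<Rightarrow> 'b::real_normed_vector) \<Rightarrow> bool" where
  "C2 f \<longleftrightarrow> (\<forall>x. f differentiable (at x)) \<and>
     (\<forall>v x. (\<lambda>z. frechet_derivative f (at z) v) differentiable (at x)) \<and>
     (\<forall>v w. continuous_on UNIV
        (\<lambda>z. frechet_derivative (\<lambda>z'. frechet_derivative f (at z') v) (at z) w))"

definition grad :: "(real^'n \<Rightarrow> real) \<Rightarrow> real^'n \<Rightarrow> real^'n" where
  "grad f x = (\<chi> i. frechet_derivative f (at x) (axis i 1))"

definition jac :: "(real^'n \<Rightarrow> real^'m) \<Rightarrow> real^'n \<Rightarrow> real^'n^'m" where
  "jac f x = (\<chi> i j. frechet_derivative (\<lambda>z. f z $ i) (at x) (axis j 1))"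

definition hess :: "(real^'n \<Rightarrow> real) \<Rightarrow> real^'n \<Rightarrow> real^'n^'n" where
  "hess f x = jac (grad f) x"

definition Ham :: "(real^'n::finite \<Rightarrow> real^'n^'n) \<Rightarrow> (real^'n \<Rightarrow> real) \<Rightarrow> real^'n \<Rightarrow> real^'n \<Rightarrow> real" where
  "Ham M U q p = 1/2 * (p \<bullet> (matrix_inv (M q) *v p)) + U q"

definition yout :: "((real,'n::{finite,linorder}) vec \<Rightarrow> ((real,'n) vec,'n) vec) \<Rightarrow> (real,'n) vec \<Rightarrow> (real,'n) vec \<Rightarrow> (real,'m::{finite,linorder}) vec" where
  "yout M q p = transpose Gmat *v (matrix_inv (M q) *v p)"

definition cl_solution ::
  "((real,'n::{finite,linorder}) vec \<Rightarrow> ((real,'n) vec,'n) vec) \<Rightarrow> ((real,'n) vec \<Rightarrow> (real,'n) vec \<Rightarrow> ((real,'n) vec,'n) vec) \<Rightarrow> ((real,'n) vec \<Rightarrow> real)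
   \<Rightarrow> ((real,'m::{finite,linorder}) vec,'m) vec \<Rightarrow> ((real,'m) vec,'m) vec \<Rightarrow> ((real,'m) vec,'m) vec \<Rightarrow> (real,'m) vec
   \<Rightarrow> real \<Rightarrow> (real \<Rightarrow> (real,'n) vec) \<Rightarrow> (real \<Rightarrow> (real,'n) vec) \<Rightarrow> (real \<Rightarrow> (real,'n) vec) \<Rightarrow> (real \<Rightarrow> (real,'n) vec) \<Rightarrow> bool"
  where
  "cl_solution M D U KP KI KD \<kappa> T q p q' p' \<longleftrightarrow> T > 0 \<and>
     (\<exists>y' :: real \<Rightarrow> (real,'m) vec. \<forall>t\<in>{0..T}.
        (q has_vector_derivative q' t) (at t within {0..T}) \<and>
        (p has_vector_derivative p' t) (at t within {0..T}) \<and>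
        ((\<lambda>s. (yout M (q s) (p s) :: (real,'m) vec)) has_vector_derivative y' t) (at t within {0..T}) \<and>
        q' t = grad (\<lambda>pp. Ham M U (q t) pp) (p t) \<and>
        p' t = - grad (\<lambda>qq. Ham M U qq (p t)) (q t)
               - D (q t) (p t) *v grad (\<lambda>pp. Ham M U (q t) pp) (p t)
               + Gmat *v (- (KP *v yout M (q t) (p t))
                          - (KI *v (transpose Gmat *v q t + \<kappa>))
                          - (KD *v y' t)))"

definition kappa :: "((real,'m::{finite,linorder}) vec,'m) vec \<Rightarrow> ((real,'n::{finite,linorder}) vec \<Rightarrow> real) \<Rightarrow> (real,'n) vec \<Rightarrow> (real,'m) vec" where
  "kappa KI U qs = - (transpose Gmat *v qs) - matrix_inv KI *v (transpose Gmat *v grad U qs)"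

definition Md :: "((real,'n::{finite,linorder}) vec \<Rightarrow> ((real,'n) vec,'n) vec) \<Rightarrow> ((real,'m::{finite,linorder}) vec,'m) vec \<Rightarrow> (real,'n) vec \<Rightarrow> ((real,'n) vec,'n) vec" where
  "Md M KD q = M q ** matrix_inv (M q + Gmat ** KD ** transpose Gmat) ** M q"

definition Ud :: "((real,'m::{finite,linorder}) vec,'m) vec \<Rightarrow> (real,'m) vec \<Rightarrow> ((real,'n::{finite,linorder}) vec \<Rightarrow> real) \<Rightarrow> (real,'n) vec \<Rightarrow> real" where
  "Ud KI \<kappa> U q = 1/2 * ((transpose Gmat *v q + \<kappa>) \<bullet> (KI *v (transpose Gmat *v q + \<kappa>))) + U q"

definition Hd :: "((real,'n::{finite,linorder}) vec \<Rightarrow> ((real,'n) vec,'n) vec) \<Rightarrow> ((real,'m::{finite,linorder}) vec,'m) vec \<Rightarrow> ((real,'m) vec,'m) vec \<Rightarrow> (real,'m) vec \<Rightarrow> ((real,'n) vec \<Rightarrow> real) \<Rightarrow> (real,'n) vec \<Rightarrow> (real,'n) vec \<Rightarrow> real" where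
  "Hd M KD KI \<kappa> U q p = 1/2 * (p \<bullet> (matrix_inv (Md M KD q) *v p)) + Ud KI \<kappa> U q"

definition Em :: "((real,'n::{finite,linorder}) vec \<Rightarrow> ((real,'n) vec,'n) vec) \<Rightarrow> ((real,'m::{finite,linorder}) vec,'m) vec \<Rightarrow> (real,'n) vec \<Rightarrow> ((real,'n) vec,'n) vec" where
  "Em M KD q = M q ** matrix_inv (Md M KD q)"

definition Bm :: "((real,'n::{finite,linorder}) vec \<Rightarrow> ((real,'n) vec,'n) vec) \<Rightarrow> ((real,'m::{finite,linorder}) vec,'m) vec \<Rightarrow> (real,'n) vec \<Rightarrow> (real,'n) vec \<Rightarrow> ((real,'n) vec,'n) vec" where
  "Bm M KD q p = Gmat ** KD ** jac (\<lambda>qq. (yout M qq p :: (real,'m) vec)) q"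

definition Jm :: "((real,'n::{finite,linorder}) vec \<Rightarrow> ((real,'n) vec,'n) vec) \<Rightarrow> ((real,'m::{finite,linorder}) vec,'m) vec \<Rightarrow> (real,'n) vec \<Rightarrow> (real,'n) vec \<Rightarrow> ((real,'n) vec,'n) vec" where
  "Jm M KD q p = matrix_inv (Em M KD q) ** (transpose (Bm M KD q p) - Bm M KD q p) ** transpose (matrix_inv (Em M KD q))"

definition Ddm :: "((real,'n::{finite,linorder}) vec \<Rightarrow> ((real,'n) vec,'n) vec) \<Rightarrow> ((real,'n) vec \<Rightarrow> (real,'n) vec \<Rightarrow> ((real,'n) vec,'n) vec) \<Rightarrow> ((real,'m::{finite,linorder}) vec,'m) vec \<Rightarrow> ((real,'m) vec,'m) vec \<Rightarrow> (real,'n) vec \<Rightarrow> (real,'n) vec \<Rightarrow> ((real,'n) vec,'n) vec" where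
  "Ddm M D KP KD q p = matrix_inv (Em M KD q) ** (D q p + Gmat ** KP ** transpose Gmat) ** transpose (matrix_inv (Em M KD q))"

end

theory Submission
  imports Defs
begin

lemma mv_bilinear: "bounded_bilinear (\<lambda>(A::real^'n^'m) (x::real^'n). A *v x)"
proof
  fix A A' :: "real^'n^'m" and x x' :: "real^'n" and r :: real
  show "(A + A') *v x = A *v x + A' *v x" by (simp add: matrix_vector_mult_add_rdistrib)
  show "A *v (x + x') = A *v x + A *v x'" by (simp add: matrix_vector_right_distrib)
  show "(r *\<^sub>R A) *v x = r *\<^sub>R (A *v x)" by (simp add: scaleR_matrix_vector_assoc)
  show "A *v (r *\<^sub>R x) = r *\<^sub>R (A *v x)" by (simp add: matrix_scaleR_vector_ac scaleR_matrix_vector_assoc)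
next
  show "\<exists>K. \<forall>A x. norm ((A::real^'n^'m) *v (x::real^'n)) \<le> norm A * norm x * K"
  proof (intro exI allI)
    fix A :: "real^'n^'m" and x :: "real^'n"
    have "norm (A *v x) \<le> (\<Sum>i\<in>UNIV. \<bar>(A *v x) $ i\<bar>)" by (rule norm_le_l1_cart)
    also have "\<dots> \<le> (\<Sum>i\<in>(UNIV::'m set). norm A * norm x)"
    proof (rule sum_mono)
      fix i
      have "\<bar>(A *v x) $ i\<bar> = \<bar>A $ i \<bullet> x\<bar>" by (simp add: matrix_vector_mul_component)
      also have "\<dots> \<le> norm (A $ i) * norm x" by (rule Cauchy_Schwarz_ineq2)
      also have "\<dots> \<le> norm A * norm x" by (intro mult_right_mono Finite_Cartesian_Product.norm_nth_le) simp_all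
      finally show "\<bar>(A *v x) $ i\<bar> \<le> norm A * norm x" .
    qed
    also have "\<dots> = norm A * norm x * real CARD('m)" by simp
    finally show "norm (A *v x) \<le> norm A * norm x * real CARD('m)" .
  qed
qed

lemma inner_mv_transpose: "((A::real^'n^'m) *v x) \<bullet> y = x \<bullet> (transpose A *v y)"
  by (metis dot_lmul_matrix inner_commute transpose_matrix_vector)

lemma inv_unique_right:
  fixes A B :: "real^'n^'n"
  assumes "A ** B = mat 1"
  shows "matrix_inv A = B" "invertible A"
proof -
  have BA: "B ** A = mat 1" using assms matrix_left_right_inverse by blast
  show inv: "invertible A" using assms BA invertible_def by blast
  have "A ** matrix_inv A = mat 1 \<and> matrix_inv A ** A = mat 1"
    unfolding matrix_inv_def by (rule someI_ex) (use assms BA in blast)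
  then have "matrix_inv A ** A = mat 1" by blast
  then have "matrix_inv A ** (A ** B) = B" by (metis matrix_mul_assoc matrix_mul_lid)
  then show "matrix_inv A = B" using assms by simp
qed

lemma inv_props:
  fixes A :: "real^'n^'n"
  assumes "invertible A"
  shows "A ** matrix_inv A = mat 1" "matrix_inv A ** A = mat 1"
proof -
  have "A ** matrix_inv A = mat 1 \<and> matrix_inv A ** A = mat 1"
    unfolding matrix_inv_def by (rule someI_ex) (use assms in \<open>auto simp: invertible_def\<close>)
  then show "A ** matrix_inv A = mat 1" "matrix_inv A ** A = mat 1" by auto
qed

lemma inv_sym:
  fixes A :: "real^'n^'n"
  assumes "invertible A" "transpose A = A"
  shows "transpose (matrix_inv A) = matrix_inv A"
proof -
  have "transpose (matrix_inv A) ** A = mat 1"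
    by (metis assms inv_props(1) matrix_transpose_mul transpose_mat)
  then have "A ** transpose (matrix_inv A) = mat 1" using matrix_left_right_inverse by blast
  then show ?thesis using inv_unique_right by metis
qed

lemma pd_invertible:
  fixes A :: "real^'n^'n"
  assumes "pos_def A"
  shows "invertible A"
proof -
  have "\<forall>x. A *v x = 0 \<longrightarrow> x = 0"
  proof (intro allI impI)
    fix x assume "A *v x = 0"
    then have "x \<bullet> (A *v x) = 0" by simp
    then show "x = 0" using assms unfolding pos_def_def by (metis less_irrefl)
  qed
  then show ?thesis using matrix_left_invertible_ker invertible_left_inverse by blast
qed

lemma pd_inv_pd:
  fixes A :: "real^'n^'n"
  assumes "pos_def A"
  shows "pos_def (matrix_inv A)"
proof -
  have inv: "invertible A" using pd_invertible assms by blast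
  have sym: "transpose A = A" using assms pos_def_def by blast
  show ?thesis unfolding pos_def_def
  proof (intro conjI allI impI)
    show "transpose (matrix_inv A) = matrix_inv A" using inv_sym inv sym by blast
    fix x :: "real^'n" assume x: "x \<noteq> 0"
    let ?w = "matrix_inv A *v x"
    have Aw: "A *v ?w = x" using inv_props(1)[OF inv] by (simp add: matrix_vector_mul_assoc)
    have "?w \<noteq> 0" using Aw x by auto
    then have "?w \<bullet> (A *v ?w) > 0" using assms pos_def_def by blast
    then show "x \<bullet> (matrix_inv A *v x) > 0" using Aw by (simp add: inner_commute)
  qed
qed

lemma vec_has_derivative:
  fixes f :: "'a::real_normed_vector \<Rightarrow> 'b::euclidean_space ^ 'n"
  assumes "\<And>i. ((\<lambda>x. f x $ i) has_derivative f' i) (at a within S)"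
  shows "(f has_derivative (\<lambda>h. \<chi> i. f' i h)) (at a within S)"
proof (subst has_derivative_componentwise_within, intro ballI)
  fix b :: "'b^'n" assume "b \<in> Basis"
  then obtain i u where b: "b = axis i u" and u: "u \<in> Basis" unfolding Basis_vec_def by auto
  have "((\<lambda>x. f x $ i \<bullet> u) has_derivative (\<lambda>h. f' i h \<bullet> u)) (at a within S)"
    using assms[of i] by (intro derivative_intros) auto
  then show "((\<lambda>x. f x \<bullet> b) has_derivative (\<lambda>h. (\<chi> i. f' i h) \<bullet> b)) (at a within S)"
    by (simp add: b inner_axis)
qed

lemma vec_differentiable:
  fixes f :: "'a::real_normed_vector \<Rightarrow> 'b::euclidean_space ^ 'n"
  assumes "\<And>i. (\<lambda>x. f x $ i) differentiable (at a within S)"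
  shows "f differentiable (at a within S)"
proof -
  from assms have "\<forall>i. \<exists>g. ((\<lambda>x. f x $ i) has_derivative g) (at a within S)"
    unfolding differentiable_def by blast
  then obtain g where "\<And>i. ((\<lambda>x. f x $ i) has_derivative g i) (at a within S)" by metis
  then show ?thesis using vec_has_derivative differentiable_def by blast
qed

lemma prod_differentiable:
  fixes f :: "'i \<Rightarrow> 'a::real_normed_vector \<Rightarrow> real"
  assumes "\<And>i. i \<in> I \<Longrightarrow> f i differentiable (at x)"
  shows "(\<lambda>x. \<Prod>i\<in>I. f i x) differentiable (at x)"
proof -
  from assms have "\<forall>i\<in>I. \<exists>g. (f i has_derivative g) (at x)"
    unfolding differentiable_def by blast
  then obtain g where "\<And>i. i \<in> I \<Longrightarrow> (f i has_derivative g i) (at x)" by metis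
  then show ?thesis using has_derivative_prod differentiable_def by blast
qed

lemma det_differentiable:
  fixes F :: "'a::real_normed_vector \<Rightarrow> real^'n^'n"
  assumes "\<And>a b. (\<lambda>x. F x $ a $ b) differentiable (at x)"
  shows "(\<lambda>x. det (F x)) differentiable (at x)"
  unfolding det_def
  by (intro differentiable_sum ballI differentiable_mult prod_differentiable assms) auto

lemma entry_differentiable:
  fixes M :: "'a::real_normed_vector \<Rightarrow> real^'n^'n"
  assumes "M differentiable (at x)"
  shows "(\<lambda>q. M q $ a $ b) differentiable (at x)"
proof -
  have "bounded_linear (\<lambda>A::real^'n^'n. A $ a $ b)"
    using bounded_linear_compose[OF bounded_linear_vec_nth bounded_linear_vec_nth] by blast
  then have "(\<lambda>A::real^'n^'n. A $ a $ b) differentiable (at (M x))"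
    by (rule bounded_linear_imp_differentiable)
  then show ?thesis using differentiable_chain_at[OF assms] by (simp add: o_def)
qed

lemma matrix_inv_cramer:
  fixes A :: "real^'n^'n"
  assumes "invertible A"
  shows "matrix_inv A $ i $ j = det (\<chi> a b. if b = i then axis j 1 $ a else A $ a $ b) / det A"
proof -
  have d: "det A \<noteq> 0" using assms invertible_det_nz by blast
  let ?x = "matrix_inv A *v axis j 1"
  have "A *v ?x = axis j 1" using inv_props(1)[OF assms] by (simp add: matrix_vector_mul_assoc)
  then have "?x = (\<chi> k. det (\<chi> a b. if b = k then axis j 1 $ a else A $ a $ b) / det A)"
    using cramer[OF d] by blast
  then have "?x $ i = det (\<chi> a b. if b = i then axis j 1 $ a else A $ a $ b) / det A" by simp
  moreover have "?x $ i = matrix_inv A $ i $ j"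
    by (simp add: matrix_vector_mult_def axis_def if_distrib cong: if_cong)
  ultimately show ?thesis by simp
qed

lemma minv_differentiable:
  fixes M :: "'a::real_normed_vector \<Rightarrow> real^'n^'n"
  assumes inv: "\<And>q. invertible (M q)" and d: "M differentiable (at x)"
  shows "(\<lambda>q. matrix_inv (M q)) differentiable (at x)"
proof (rule vec_differentiable, rule vec_differentiable)
  fix i j
  have eq: "(\<lambda>q. matrix_inv (M q) $ i $ j) =
     (\<lambda>q. det (\<chi> a b. if b = i then axis j 1 $ a else M q $ a $ b) / det (M q))"
    using matrix_inv_cramer[OF inv] by auto
  have e: "\<And>a b. (\<lambda>q. M q $ a $ b) differentiable (at x)" using entry_differentiable[OF d] .
  have "(\<lambda>q. det (\<chi> a b. if b = i then axis j 1 $ a else M q $ a $ b)) differentiable (at x)"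
  proof (rule det_differentiable)
    fix a b
    show "(\<lambda>q. (\<chi> a b. if b = i then axis j 1 $ a else M q $ a $ b) $ a $ b) differentiable (at x)"
      by (cases "b = i") (simp_all add: e)
  qed
  moreover have "(\<lambda>q. det (M q)) differentiable (at x)"
    by (rule det_differentiable) (auto intro: e)
  moreover have "det (M x) \<noteq> 0" using inv invertible_det_nz by blast
  ultimately show "(\<lambda>q. matrix_inv (M q) $ i $ j) differentiable (at x)"
    unfolding eq by (intro differentiable_divide)
qed

lemma vec_expand_real: "(x::real^'n) = (\<Sum>i\<in>UNIV. x $ i *\<^sub>R axis i 1)"
  using basis_expansion[of x] by (simp add: scalar_mult_eq_scaleR)

lemma linear_expand:
  assumes "bounded_linear (f' :: real^'n \<Rightarrow> 'b::real_normed_vector)"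
  shows "f' h = (\<Sum>i\<in>UNIV. h $ i *\<^sub>R f' (axis i 1))"
proof -
  interpret bounded_linear f' by fact
  have "f' h = f' (\<Sum>i\<in>UNIV. h $ i *\<^sub>R axis i 1)" using vec_expand_real[of h] by simp
  also have "\<dots> = (\<Sum>i\<in>UNIV. h $ i *\<^sub>R f' (axis i 1))" by (simp add: sum scaleR)
  finally show ?thesis .
qed

lemma grad_eq:
  assumes "(f has_derivative f') (at x)"
  shows "grad f x = (\<chi> i. f' (axis i 1))"
  unfolding grad_def using frechet_derivative_at[OF assms] by simp

lemma grad_inner:
  assumes "(f has_derivative f') (at x)"
  shows "grad f x \<bullet> h = f' h"
proof -
  have bl: "bounded_linear f'" using assms has_derivative_bounded_linear by blast
  have "f' h = (\<Sum>i\<in>UNIV. h $ i *\<^sub>R f' (axis i 1))" by (rule linear_expand[OF bl])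
  then show ?thesis by (simp add: grad_eq[OF assms] inner_vec_def mult.commute)
qed

lemma grad_by_inner:
  assumes "(f has_derivative (\<lambda>h. w \<bullet> h)) (at x)"
  shows "grad f x = w"
  using grad_eq[OF assms] by (simp add: vec_eq_iff inner_axis)

lemma comp_has_derivative:
  fixes f :: "'a::real_normed_vector \<Rightarrow> 'b::real_normed_vector ^ 'm"
  assumes "(f has_derivative f') F"
  shows "((\<lambda>z. f z $ i) has_derivative (\<lambda>h. f' h $ i)) F"
  using bounded_linear.has_derivative[OF bounded_linear_vec_nth assms] .

lemma jac_row: "jac f x $ i = grad (\<lambda>z. f z $ i) x"
  by (simp add: jac_def grad_def)

lemma jac_mv:
  fixes f :: "real^'n \<Rightarrow> real^'m"
  assumes "(f has_derivative f') (at x)"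
  shows "jac f x *v h = f' h"
proof -
  have "(jac f x *v h) $ i = f' h $ i" for i
    using grad_inner[OF comp_has_derivative[OF assms, of i], of h]
    by (simp add: matrix_vector_mul_component jac_row)
  then show ?thesis by (simp add: vec_eq_iff)
qed

lemma C2_has_derivative:
  assumes "C2 f"
  shows "(f has_derivative frechet_derivative f (at x)) (at x)"
  using assms unfolding C2_def by (simp add: frechet_derivative_works)

lemma pos_mono:
  fixes i j :: "'a::{finite,linorder}"
  assumes "i < j" shows "pos i < pos j"
proof -
  have "{k. k < i} \<subset> {k. k < j}" using assms by auto
  then show ?thesis unfolding pos_def by (intro psubset_card_mono) auto
qed

lemma pos_inj: "pos (i::'a::{finite,linorder}) = pos j \<Longrightarrow> i = j"
  by (metis less_irrefl linorder_neqE pos_mono)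

lemma pos_lt: "pos (i::'a::{finite,linorder}) < CARD('a)"
proof -
  have "{k. k < i} \<subset> UNIV" by auto
  then show ?thesis unfolding pos_def by (intro psubset_card_mono) auto
qed

lemma pos_surj:
  assumes "k < CARD('a::{finite,linorder})"
  shows "\<exists>i::'a. pos i = k"
proof -
  have inj: "inj (pos :: 'a \<Rightarrow> nat)" by (auto intro: injI pos_inj)
  have "range (pos :: 'a \<Rightarrow> nat) \<subseteq> {..<CARD('a)}" using pos_lt by auto
  moreover have "card (range (pos :: 'a \<Rightarrow> nat)) = card {..<CARD('a)}"
    using card_image[OF inj] by simp
  ultimately have "range (pos :: 'a \<Rightarrow> nat) = {..<CARD('a)}"
    by (intro card_subset_eq) auto
  then show ?thesis using assms by (metis lessThan_iff rangeE)
qed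

lemma sum_pos_delta:
  fixes g :: "'a::{finite,linorder} \<Rightarrow> real"
  assumes "pos k0 = c"
  shows "(\<Sum>k\<in>UNIV. (if pos k = c then 1 else 0) * g k) = g k0"
proof -
  have "\<And>k. (pos k = c) = (k = k0)" using assms pos_inj by metis
  then have eq: "(\<lambda>k. (if pos k = c then 1 else 0) * g k) = (\<lambda>k. if k = k0 then g k else 0)" by auto
  show ?thesis by (subst eq) simp
qed

lemma sum_pos_delta':
  fixes g :: "'a::{finite,linorder} \<Rightarrow> real"
  assumes "pos k0 = c"
  shows "(\<Sum>k\<in>UNIV. g k * (if pos k = c then 1 else 0)) = g k0"
  using sum_pos_delta[OF assms, of g] by (simp add: mult.commute)

lemma GGt:
  fixes g :: "(real,'n::{finite,linorder}) vec"
  assumes gz: "Gperp_zero TYPE('m::{finite,linorder}) g" and mn: "CARD('m) \<le> CARD('n)"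
  shows "(Gmat :: ((real,'m) vec,'n) vec) *v (transpose Gmat *v g) = g"
proof -
  let ?l = "CARD('n) - CARD('m)"
  have Gt: "(transpose (Gmat :: ((real,'m) vec,'n) vec) *v g) $ j = g $ k" if "pos k = ?l + pos j" for j :: 'm and k :: 'n
  proof -
    have "(transpose (Gmat :: ((real,'m) vec,'n) vec) *v g) $ j = (\<Sum>k\<in>UNIV. (if pos k = ?l + pos j then 1 else 0) * g $ k)"
      by (simp add: Gmat_def vector_matrix_mult_def mult.commute)
    also have "\<dots> = g $ k" by (rule sum_pos_delta[OF that])
    finally show ?thesis .
  qed
  have "((Gmat :: ((real,'m) vec,'n) vec) *v (transpose Gmat *v g)) $ i = g $ i" for i
  proof (cases "?l \<le> pos i")
    case True
    have "pos i - ?l < CARD('m)" using pos_lt[of i] True mn by linarith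
    then obtain j :: 'm where j: "pos j = pos i - ?l" using pos_surj by blast
    have ij: "pos i = ?l + pos j" using j True by simp
    have "((Gmat :: ((real,'m) vec,'n) vec) *v (transpose Gmat *v g)) $ i
        = (\<Sum>j'\<in>UNIV. (if pos i = ?l + pos j' then 1 else 0) * (transpose (Gmat :: ((real,'m) vec,'n) vec) *v g) $ j')"
      by (simp add: Gmat_def matrix_vector_mult_def del: transpose_matrix_vector)
    also have "\<dots> = (\<Sum>j'\<in>UNIV. (if pos j' = pos j then 1 else 0) * (transpose (Gmat :: ((real,'m) vec,'n) vec) *v g) $ j')"
      using ij by (intro sum.cong) auto
    also have "\<dots> = (transpose (Gmat :: ((real,'m) vec,'n) vec) *v g) $ j" by (rule sum_pos_delta) simp
    also have "\<dots> = g $ i" using Gt[OF ij] .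
    finally show ?thesis .
  next
    case False
    have "((Gmat :: ((real,'m) vec,'n) vec) *v (transpose Gmat *v g)) $ i
        = (\<Sum>j'\<in>UNIV. (if pos i = ?l + pos j' then 1 else 0) * (transpose (Gmat :: ((real,'m) vec,'n) vec) *v g) $ j')"
      by (simp add: Gmat_def matrix_vector_mult_def del: transpose_matrix_vector)
    also have "\<dots> = 0" using False by (intro sum.neutral) auto
    also have "\<dots> = g $ i" using gz False unfolding Gperp_zero_def by auto
    finally show ?thesis .
  qed
  then show ?thesis by (simp add: vec_eq_iff del: transpose_matrix_vector)
qed

lemma has_derivative_mv [derivative_intros]:
  fixes f :: "'a::real_normed_vector \<Rightarrow> real^'n^'m" and g :: "'a \<Rightarrow> real^'n"
  assumes "(f has_derivative f') (at x within s)" "(g has_derivative g') (at x within s)"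
  shows "((\<lambda>x. f x *v g x) has_derivative (\<lambda>h. f x *v g' h + f' h *v g x)) (at x within s)"
  using bounded_bilinear.FDERIV[OF mv_bilinear assms] by simp

lemma has_derivative_mv_const [derivative_intros]:
  fixes g :: "'a::real_normed_vector \<Rightarrow> real^'n" and A :: "real^'n^'m"
  assumes "(g has_derivative g') (at x within s)"
  shows "((\<lambda>x. A *v g x) has_derivative (\<lambda>h. A *v g' h)) (at x within s)"
  using bounded_linear.has_derivative[OF bounded_bilinear.bounded_linear_right[OF mv_bilinear] assms]
  by blast

lemma mv_neg [simp]: "(A::real^'n^'m) *v (- x) = - (A *v x)"
  by (simp add: matrix_vector_mult_def vec_eq_iff sum_negf)

lemma mv_neg_left [simp]: "(- (A::real^'n^'m)) *v x = - (A *v x)"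
  by (simp add: matrix_vector_mult_def vec_eq_iff sum_negf)

lemma sym_inner: "transpose A = A \<Longrightarrow> x \<bullet> ((A::real^'n^'n) *v y) = (A *v x) \<bullet> y"
  by (simp add: inner_mv_transpose)

context
  fixes M :: "(real,'n::{finite,linorder}) vec \<Rightarrow> ((real,'n) vec,'n) vec"
  assumes M_C2: "C2 M" and M_pd: "\<And>q. pos_def (M q)"
begin

lemma M_inv: "invertible (M q)" using pd_invertible M_pd by blast
lemma M_sym: "transpose (M q) = M q" using M_pd pos_def_def by blast
lemma Minv_sym: "transpose (matrix_inv (M q)) = matrix_inv (M q)"
  using inv_sym M_inv M_sym by blast
lemma Minv_pd: "pos_def (matrix_inv (M q))" using pd_inv_pd M_pd by blast
lemma M_Minv: "M q ** matrix_inv (M q) = mat 1" using inv_props M_inv by blast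
lemma Minv_M: "matrix_inv (M q) ** M q = mat 1" using inv_props M_inv by blast

lemma Minv_deriv:
  "((\<lambda>q. matrix_inv (M q)) has_derivative frechet_derivative (\<lambda>q. matrix_inv (M q)) (at x)) (at x)"
proof -
  have "M differentiable (at x)" using M_C2 unfolding C2_def by blast
  then have "(\<lambda>q. matrix_inv (M q)) differentiable (at x)"
    using minv_differentiable M_inv by blast
  then show ?thesis by (simp add: frechet_derivative_works)
qed

lemma Minv_cont: "continuous (at x) (\<lambda>q. matrix_inv (M q))"
  using Minv_deriv has_derivative_continuous by blast

lemma Ham_p_deriv:
  "((\<lambda>pp. Ham M U q pp) has_derivative (\<lambda>h. (matrix_inv (M q) *v p) \<bullet> h)) (at p)"
proof -
  let ?A = "matrix_inv (M q)"
  have "((\<lambda>pp. 1/2 * (pp \<bullet> (?A *v pp)) + U q) has_derivative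
          (\<lambda>h. 1/2 * (p \<bullet> (?A *v h) + h \<bullet> (?A *v p)) + 0)) (at p)"
    by (intro derivative_intros)
  moreover have "(\<lambda>h. 1/2 * (p \<bullet> (?A *v h) + h \<bullet> (?A *v p)) + 0) = (\<lambda>h. (?A *v p) \<bullet> h)"
    using sym_inner[OF Minv_sym] by (auto simp: inner_commute algebra_simps)
  ultimately show ?thesis unfolding Ham_def by simp
qed

lemma grad_Ham_p: "grad (\<lambda>pp. Ham M U q pp) p = matrix_inv (M q) *v p"
  using grad_by_inner[OF Ham_p_deriv] .

lemma Ham_q_deriv:
  assumes "C2 U"
  shows "((\<lambda>qq. Ham M U qq p) has_derivative
     (\<lambda>h. 1/2 * (p \<bullet> (frechet_derivative (\<lambda>q. matrix_inv (M q)) (at x) h *v p))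
           + frechet_derivative U (at x) h)) (at x)"
proof -
  have "((\<lambda>qq. 1/2 * (p \<bullet> (matrix_inv (M qq) *v p)) + U qq) has_derivative
     (\<lambda>h. 1/2 * (p \<bullet> (matrix_inv (M x) *v 0 + frechet_derivative (\<lambda>q. matrix_inv (M q)) (at x) h *v p))
           + frechet_derivative U (at x) h)) (at x)"
    by (intro derivative_intros Minv_deriv C2_has_derivative[OF assms])
  then show ?thesis unfolding Ham_def by simp
qed

end

lemma part1:
  fixes M :: "(real,'n::{finite,linorder}) vec \<Rightarrow> ((real,'n) vec,'n) vec"
    and D :: "(real,'n) vec \<Rightarrow> (real,'n) vec \<Rightarrow> ((real,'n) vec,'n) vec"
    and U :: "(real,'n) vec \<Rightarrow> real"
    and KP KI KD :: "((real,'m::{finite,linorder}) vec,'m) vec"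
    and qs :: "(real,'n) vec"
  assumes mn: "CARD('m) \<le> CARD('n)"
    and M_C2: "C2 M" and M_pd: "\<And>q. pos_def (M q)"
    and qs_eq: "Gperp_zero TYPE('m) (grad U qs)"
    and KI_pd: "pos_def KI"
  shows "\<forall>T>0. cl_solution M D U KP KI KD (kappa KI U qs) T (\<lambda>_. qs) (\<lambda>_. 0) (\<lambda>_. 0) (\<lambda>_. 0)"
proof (intro allI impI)
  fix T :: real assume T: "T > 0"
  let ?g = "grad U qs"
  let ?G = "Gmat :: ((real,'m) vec,'n) vec"
  have y0: "\<And>q. yout M q 0 = (0 :: (real,'m) vec)" by (simp add: yout_def)
  have gp: "grad (\<lambda>pp. Ham M U qs pp) 0 = 0"
    using grad_Ham_p[OF M_C2 M_pd, of U qs 0] by simp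
  have hq: "(\<lambda>qq. Ham M U qq 0) = U" by (simp add: Ham_def)
  have KIinv: "KI ** matrix_inv KI = mat 1" using inv_props pd_invertible[OF KI_pd] by blast
  have k: "KI *v (transpose ?G *v qs + kappa KI U qs) = - (transpose ?G *v ?g)"
  proof -
    have "transpose ?G *v qs + kappa KI U qs = - (matrix_inv KI *v (transpose ?G *v ?g))"
      unfolding kappa_def by simp
    then show ?thesis
      by (simp add: matrix_vector_mul_assoc matrix_mul_assoc KIinv del: transpose_matrix_vector)
  qed
  have GG: "?G *v (transpose ?G *v ?g) = ?g" using GGt[OF qs_eq mn] .
  have pe: "(0::(real,'n) vec) = - grad (\<lambda>qq. Ham M U qq 0) qs
               - D qs 0 *v grad (\<lambda>pp. Ham M U qs pp) 0
               + ?G *v (- (KP *v yout M qs 0)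
                          - (KI *v (transpose ?G *v qs + kappa KI U qs))
                          - (KD *v 0))"
    unfolding hq gp y0 k using GG by (simp del: transpose_matrix_vector)
  show "cl_solution M D U KP KI KD (kappa KI U qs) T (\<lambda>_. qs) (\<lambda>_. 0) (\<lambda>_. 0) (\<lambda>_. 0)"
    unfolding cl_solution_def
  proof (intro conjI exI[of _ "\<lambda>_. 0"] ballI)
    fix t assume "t \<in> {0..T}"
    show "((\<lambda>_. qs) has_vector_derivative 0) (at t within {0..T})" by (rule has_vector_derivative_const)
    show "((\<lambda>_. 0::(real,'n) vec) has_vector_derivative 0) (at t within {0..T})" by (rule has_vector_derivative_const)
    show "((\<lambda>s. yout M qs 0 :: (real,'m) vec) has_vector_derivative 0) (at t within {0..T})" by (rule has_vector_derivative_const)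
    show "(0::(real,'n) vec) = grad (\<lambda>pp. Ham M U qs pp) 0" using gp by simp
    show "(0::(real,'n) vec) = - grad (\<lambda>qq. Ham M U qq 0) qs
               - D qs 0 *v grad (\<lambda>pp. Ham M U qs pp) 0
               + ?G *v (- (KP *v yout M qs 0)
                          - (KI *v (transpose ?G *v qs + kappa KI U qs))
                          - (KD *v 0))" by (rule pe)
  qed (rule T)
qed

declare transpose_matrix_vector [simp del]

lemma transpose_add_m: "transpose ((A::real^'n^'m) + B) = transpose A + transpose B"
  by (simp add: transpose_def vec_eq_iff)

lemma transpose_diff_m: "transpose ((A::real^'n^'m) - B) = transpose A - transpose B"
  by (simp add: transpose_def vec_eq_iff)

lemma mv_add_left: "((A::real^'n^'m) + B) *v x = A *v x + B *v x"
  by (simp add: matrix_vector_mult_add_rdistrib)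

lemma mv_diff_left: "((A::real^'n^'m) - B) *v x = A *v x - B *v x"
  by (simp add: matrix_vector_mult_diff_rdistrib)

lemma mv_add_right: "(A::real^'n^'m) *v (x + y) = A *v x + A *v y"
  by (simp add: matrix_vector_right_distrib)

lemma mv_diff_right: "(A::real^'n^'m) *v (x - y) = A *v x - A *v y"
  by (simp add: matrix_vector_mult_diff_distrib)

lemma matrix_add_rdistrib: "((B + C) ** A) = (B ** A) + (C ** (A::real^'p^'n))"
  by (vector matrix_matrix_mult_def sum.distrib[symmetric] field_simps)

lemma mv_mat1: "mat 1 *v (x::real^'n) = x" by simp

lemma psd_GKG:
  fixes G :: "real^'m^'n" and K :: "real^'m^'m"
  assumes "psd K"
  shows "psd (G ** K ** transpose G)"
  unfolding psd_def
proof (intro conjI allI)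
  show "transpose (G ** K ** transpose G) = G ** K ** transpose G"
    using assms unfolding psd_def by (simp add: matrix_transpose_mul matrix_mul_assoc)
  fix x :: "real^'n"
  have "x \<bullet> (G ** K ** transpose G *v x) = (transpose G *v x) \<bullet> (K *v (transpose G *v x))"
    by (simp add: matrix_vector_mul_assoc[symmetric] inner_mv_transpose inner_commute)
  then show "0 \<le> x \<bullet> (G ** K ** transpose G *v x)" using assms unfolding psd_def by simp
qed

lemma pd_plus_psd:
  assumes "pos_def (A::real^'n^'n)" "psd B"
  shows "pos_def (A + B)"
  using assms unfolding pos_def_def psd_def
  by (auto simp: transpose_add_m mv_add_left inner_add_right add_pos_nonneg)

lemma part3_alg:
  fixes Mq Dq :: "real^'n^'n" and KP KI KD :: "real^'m^'m" and Jy :: "real^'n^'m"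
    and G :: "real^'m^'n"
    and pt p' gq :: "real^'n" and z yd :: "real^'m"
  defines "A \<equiv> matrix_inv Mq"
  defines "Md' \<equiv> Mq ** matrix_inv (Mq + G ** KD ** transpose G) ** Mq"
  defines "Em' \<equiv> Mq ** matrix_inv Md'"
  defines "B \<equiv> G ** KD ** Jy"
  assumes Mpd: "pos_def Mq" and KDpsd: "psd KD"
    and yd: "yd = Jy *v (A *v pt) + transpose G *v (A *v p')"
    and ode: "p' = - gq - Dq *v (A *v pt) + G *v (- (KP *v (transpose G *v (A *v pt))) - KI *v z - KD *v yd)"
  shows "matrix_inv Md' = A + A ** G ** KD ** transpose G ** A"
    and "A *v pt = A ** Md' *v (matrix_inv Md' *v pt)"
    and "p' = - (Md' ** A *v (gq + transpose Jy *v (KD *v (transpose G *v (A *v pt))) + G *v (KI *v z)))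
         + (matrix_inv Em' ** (transpose B - B) ** transpose (matrix_inv Em')
            - matrix_inv Em' ** (Dq + G ** KP ** transpose G) ** transpose (matrix_inv Em'))
           *v (matrix_inv Md' *v pt)"
proof -
  let ?Q = "G ** KD ** transpose G"
  let ?P = "Mq + ?Q"
  let ?S = "matrix_inv ?P"
  let ?N = "A + A ** G ** KD ** transpose G ** A"
  have invM: "invertible Mq" using pd_invertible Mpd by blast
  have MA: "Mq ** A = mat 1" "A ** Mq = mat 1" using inv_props[OF invM] by (auto simp: A_def)
  have MAv: "\<And>x. Mq *v (A *v x) = x" "\<And>x. A *v (Mq *v x) = x"
    using MA by (simp_all add: matrix_vector_mul_assoc)
  have Msym: "transpose Mq = Mq" using Mpd pos_def_def by blast
  have Asym: "transpose A = A" using inv_sym[OF invM Msym] by (simp add: A_def)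
  have Ppd: "pos_def ?P" using pd_plus_psd[OF Mpd psd_GKG[OF KDpsd]] .
  have invP: "invertible ?P" using pd_invertible Ppd by blast
  have SP: "?S ** ?P = mat 1" "?P ** ?S = mat 1" using inv_props[OF invP] by auto
  have Ssym: "transpose ?S = ?S" using inv_sym[OF invP] Ppd pos_def_def by blast
  have KDsym: "transpose KD = KD" using KDpsd psd_def by blast
  have MdN: "Md' ** ?N = mat 1"
  proof -
    have "Md' ** ?N = Mq ** ?S ** (Mq ** ?N)" by (simp add: Md'_def matrix_mul_assoc)
    also have "Mq ** ?N = mat 1 + ?Q ** A"
      by (simp add: matrix_add_ldistrib matrix_mul_assoc MA)
    also have "\<dots> = ?P ** A" by (simp add: matrix_add_rdistrib MA)
    also have "Mq ** ?S ** (?P ** A) = Mq ** (?S ** ?P) ** A" by (simp add: matrix_mul_assoc)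
    also have "\<dots> = mat 1" by (simp add: SP MA)
    finally show ?thesis .
  qed
  have Ninv: "matrix_inv Md' = ?N" using inv_unique_right[OF MdN] by blast
  then show "matrix_inv Md' = A + A ** G ** KD ** transpose G ** A" .
  have NMd: "?N ** Md' = mat 1" using MdN matrix_left_right_inverse by blast
  have MdN': "Md' ** matrix_inv Md' = mat 1" using MdN Ninv by simp
  have "A ** Md' *v (matrix_inv Md' *v pt) = (A ** (Md' ** matrix_inv Md')) *v pt"
    by (simp only: matrix_vector_mul_assoc matrix_mul_assoc)
  then show "A *v pt = A ** Md' *v (matrix_inv Md' *v pt)" by (simp add: MdN')
  have Em_eq: "Em' = Mq ** ?N" by (simp add: Em'_def Ninv)
  let ?W = "Md' ** A"
  have EmW: "Em' ** ?W = mat 1"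
  proof -
    have "Em' ** ?W = Mq ** (?N ** Md') ** A" by (simp add: Em_eq matrix_mul_assoc)
    also have "\<dots> = mat 1" by (simp add: NMd MA)
    finally show ?thesis .
  qed
  have Winv: "matrix_inv Em' = ?W" using inv_unique_right[OF EmW] by blast
  have WEm: "?W ** Em' = mat 1" using EmW matrix_left_right_inverse by blast
  have Mdsym: "transpose Md' = Md'"
    by (simp add: Md'_def matrix_transpose_mul Msym Ssym matrix_mul_assoc)
  have Wt: "transpose ?W = A ** Md'" by (simp add: matrix_transpose_mul Asym Mdsym)
  have WtN: "transpose ?W *v (?N *v pt) = A *v pt"
  proof -
    have "transpose ?W *v (matrix_inv Md' *v pt) = (A ** (Md' ** matrix_inv Md')) *v pt"
      unfolding Wt by (simp only: matrix_vector_mul_assoc matrix_mul_assoc)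
    then show ?thesis unfolding Ninv by (simp only: MdN matrix_mul_rid)
  qed
  let ?v = "A *v pt"
  let ?y = "transpose G *v ?v"
  let ?gHd = "gq + transpose Jy *v (KD *v ?y) + G *v (KI *v z)"
  let ?X = "- ?gHd + (transpose B - B - (Dq + G ** KP ** transpose G)) *v ?v"
  have Emp: "Em' *v p' = p' + G *v (KD *v (transpose G *v (A *v p')))"
  proof -
    have "Em' *v p' = Mq *v (?N *v p')" by (simp add: Em_eq matrix_vector_mul_assoc)
    also have "?N *v p' = A *v p' + A *v (G *v (KD *v (transpose G *v (A *v p'))))"
      by (simp add: mv_add_left matrix_vector_mul_assoc[symmetric])
    also have "Mq *v \<dots> = p' + G *v (KD *v (transpose G *v (A *v p')))"
      by (simp add: mv_add_right MAv)
    finally show ?thesis .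
  qed
  have BtV: "transpose B *v ?v = transpose Jy *v (KD *v ?y)"
    by (simp add: B_def matrix_transpose_mul KDsym matrix_vector_mul_assoc matrix_mul_assoc)
  have BV: "B *v ?v = G *v (KD *v (Jy *v ?v))"
    by (simp add: B_def matrix_vector_mul_assoc matrix_mul_assoc)
  have EmX: "Em' *v p' = ?X"
  proof -
    have "Em' *v p' = p' + G *v (KD *v (transpose G *v (A *v p')))" by (rule Emp)
    also have "\<dots> = - gq - Dq *v ?v - G *v (KP *v ?y) - G *v (KI *v z) - G *v (KD *v (Jy *v ?v))"
      by (subst ode, simp add: yd mv_add_right mv_diff_right algebra_simps)
    also have "\<dots> = ?X"
      by (simp add: mv_add_left mv_diff_left BtV BV matrix_vector_mul_assoc[symmetric] algebra_simps)
    finally show ?thesis .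
  qed
  have "p' = ?W *v (Em' *v p')" by (simp add: matrix_vector_mul_assoc WEm)
  also have "\<dots> = ?W *v ?X" by (simp add: EmX)
  also have "\<dots> = - (?W *v ?gHd) + ?W *v ((transpose B - B - (Dq + G ** KP ** transpose G)) *v (transpose ?W *v (?N *v pt)))"
    by (simp add: WtN mv_add_right mv_diff_right)
  also have "\<dots> = - (Md' ** A *v ?gHd)
         + (matrix_inv Em' ** (transpose B - B) ** transpose (matrix_inv Em')
            - matrix_inv Em' ** (Dq + G ** KP ** transpose G) ** transpose (matrix_inv Em'))
           *v (matrix_inv Md' *v pt)"
    by (simp add: Winv Ninv matrix_vector_mul_assoc[symmetric] mv_diff_left mv_diff_right)
  finally show "p' = - (Md' ** A *v (gq + transpose Jy *v (KD *v (transpose G *v (A *v pt))) + G *v (KI *v z)))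
         + (matrix_inv Em' ** (transpose B - B) ** transpose (matrix_inv Em')
            - matrix_inv Em' ** (Dq + G ** KP ** transpose G) ** transpose (matrix_inv Em'))
           *v (matrix_inv Md' *v pt)" .
qed

lemma Md_inv_eq:
  fixes Mq :: "real^'n^'n" and KD :: "real^'m^'m" and G :: "real^'m^'n"
  assumes Mpd: "pos_def Mq" and KDpsd: "psd KD"
  shows "matrix_inv (Mq ** matrix_inv (Mq + G ** KD ** transpose G) ** Mq)
           = matrix_inv Mq + matrix_inv Mq ** G ** KD ** transpose G ** matrix_inv Mq"
    and "transpose (matrix_inv Mq + matrix_inv Mq ** G ** KD ** transpose G ** matrix_inv Mq)
           = matrix_inv Mq + matrix_inv Mq ** G ** KD ** transpose G ** matrix_inv Mq"
proof -
  let ?A = "matrix_inv Mq"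
  let ?Q = "G ** KD ** transpose G"
  let ?P = "Mq + ?Q"
  let ?S = "matrix_inv ?P"
  let ?N = "?A + ?A ** G ** KD ** transpose G ** ?A"
  let ?Md = "Mq ** ?S ** Mq"
  have invM: "invertible Mq" using pd_invertible Mpd by blast
  have MA: "Mq ** ?A = mat 1" "?A ** Mq = mat 1" using inv_props[OF invM] by auto
  have Msym: "transpose Mq = Mq" using Mpd pos_def_def by blast
  have Asym: "transpose ?A = ?A" using inv_sym[OF invM Msym] .
  have Ppd: "pos_def ?P" using pd_plus_psd[OF Mpd psd_GKG[OF KDpsd]] .
  have invP: "invertible ?P" using pd_invertible Ppd by blast
  have SP: "?S ** ?P = mat 1" "?P ** ?S = mat 1" using inv_props[OF invP] by auto
  have Ssym: "transpose ?S = ?S" using inv_sym[OF invP] Ppd pos_def_def by blast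
  have MdN: "?Md ** ?N = mat 1"
  proof -
    have "?Md ** ?N = Mq ** ?S ** (Mq ** ?N)" by (simp add: matrix_mul_assoc)
    also have "Mq ** ?N = mat 1 + ?Q ** ?A"
      by (simp add: matrix_add_ldistrib matrix_mul_assoc MA)
    also have "\<dots> = ?P ** ?A" by (simp add: matrix_add_rdistrib MA)
    also have "Mq ** ?S ** (?P ** ?A) = Mq ** (?S ** ?P) ** ?A" by (simp add: matrix_mul_assoc)
    also have "\<dots> = mat 1" by (simp add: SP MA)
    finally show ?thesis .
  qed
  show Ninv: "matrix_inv ?Md = ?N" using inv_unique_right[OF MdN] by blast
  have invMd: "invertible ?Md" using inv_unique_right[OF MdN] by blast
  have Mdsym: "transpose ?Md = ?Md"
    by (simp add: matrix_transpose_mul Msym Ssym matrix_mul_assoc)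
  show "transpose ?N = ?N" using inv_sym[OF invMd Mdsym] Ninv by simp
qed

lemma quad_deriv:
  assumes "transpose N = (N::real^'n^'n)"
  shows "((\<lambda>pp. 1/2 * (pp \<bullet> (N *v pp)) + c) has_derivative (\<lambda>h. (N *v p) \<bullet> h)) (at p)"
proof -
  have "((\<lambda>pp. 1/2 * (pp \<bullet> (N *v pp)) + c) has_derivative
          (\<lambda>h. 1/2 * (p \<bullet> (N *v h) + h \<bullet> (N *v p)) + 0)) (at p)"
    by (intro derivative_intros)
  moreover have "(\<lambda>h. 1/2 * (p \<bullet> (N *v h) + h \<bullet> (N *v p)) + 0) = (\<lambda>h. (N *v p) \<bullet> h)"
    using sym_inner[OF assms] by (auto simp: inner_commute algebra_simps)
  ultimately show ?thesis by simp
qed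

lemma inner_G_swap: "(x::real^'n) \<bullet> ((G::real^'m^'n) *v u) = (transpose G *v x) \<bullet> u"
  by (metis inner_commute inner_mv_transpose)

lemma mv_scaleR_right: "(A::real^'n^'m) *v (c *\<^sub>R x) = c *\<^sub>R (A *v x)"
  by (simp add: matrix_scaleR_vector_ac scaleR_matrix_vector_assoc)

lemma mv_scaleR_left: "(c *\<^sub>R (A::real^'n^'m)) *v x = c *\<^sub>R (A *v x)"
  by (simp add: scaleR_matrix_vector_assoc)

lemma part3:
  fixes M :: "(real,'n::{finite,linorder}) vec \<Rightarrow> ((real,'n) vec,'n) vec"
    and D :: "(real,'n) vec \<Rightarrow> (real,'n) vec \<Rightarrow> ((real,'n) vec,'n) vec"
    and U :: "(real,'n) vec \<Rightarrow> real"
    and KP KI KD :: "((real,'m::{finite,linorder}) vec,'m) vec"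
    and \<kappa> :: "(real,'m) vec"
  assumes M_C2: "C2 M" and M_pd: "\<And>q. pos_def (M q)"
    and U_C2: "C2 U" and KI_pd: "pos_def KI" and KD_psd: "psd KD"
  shows "\<forall>T q p q' p' t.
          cl_solution M D U KP KI KD \<kappa> T q p q' p' \<longrightarrow> t \<in> {0..T} \<longrightarrow>
            q' t = matrix_inv (M (q t)) ** Md M KD (q t)
                     *v grad (\<lambda>pp. Hd M KD KI \<kappa> U (q t) pp) (p t)
          \<and> p' t = - (Md M KD (q t) ** matrix_inv (M (q t))
                       *v grad (\<lambda>qq. Hd M KD KI \<kappa> U qq (p t)) (q t))
                   + (Jm M KD (q t) (p t) - Ddm M D KP KD (q t) (p t))
                       *v grad (\<lambda>pp. Hd M KD KI \<kappa> U (q t) pp) (p t)"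
proof (intro allI impI)
  fix T q p q' p' t
  assume sol: "cl_solution M D U KP KI KD \<kappa> T q p q' p'" and t: "t \<in> {0..T}"
  from sol obtain y' :: "real \<Rightarrow> (real,'m) vec" where T: "T > 0" and H: "\<forall>t\<in>{0..T}.
        (q has_vector_derivative q' t) (at t within {0..T}) \<and>
        (p has_vector_derivative p' t) (at t within {0..T}) \<and>
        ((\<lambda>s. (yout M (q s) (p s) :: (real,'m) vec)) has_vector_derivative y' t) (at t within {0..T}) \<and>
        q' t = grad (\<lambda>pp. Ham M U (q t) pp) (p t) \<and>
        p' t = - grad (\<lambda>qq. Ham M U qq (p t)) (q t)
               - D (q t) (p t) *v grad (\<lambda>pp. Ham M U (q t) pp) (p t)
               + Gmat *v (- (KP *v yout M (q t) (p t))
                          - (KI *v (transpose Gmat *v q t + \<kappa>))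
                          - (KD *v y' t))"
    unfolding cl_solution_def by blast
  from bspec[OF H t] have dq: "(q has_vector_derivative q' t) (at t within {0..T})"
    and dp: "(p has_vector_derivative p' t) (at t within {0..T})"
    and dy: "((\<lambda>s. (yout M (q s) (p s) :: (real,'m) vec)) has_vector_derivative y' t) (at t within {0..T})"
    and eq_q: "q' t = grad (\<lambda>pp. Ham M U (q t) pp) (p t)"
    and eq_p: "p' t = - grad (\<lambda>qq. Ham M U qq (p t)) (q t)
               - D (q t) (p t) *v grad (\<lambda>pp. Ham M U (q t) pp) (p t)
               + Gmat *v (- (KP *v yout M (q t) (p t))
                          - (KI *v (transpose Gmat *v q t + \<kappa>))
                          - (KD *v y' t))" by blast+
  define A where "A = matrix_inv (M (q t))"
  define Ai' where "Ai' = frechet_derivative (\<lambda>q. matrix_inv (M q)) (at (q t))"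
  define G where "G = (Gmat :: ((real,'m) vec,'n) vec)"
  define Jy where "Jy = jac (\<lambda>qq. (yout M qq (p t) :: (real,'m) vec)) (q t)"
  define gq where "gq = grad (\<lambda>qq. Ham M U qq (p t)) (q t)"
  have dMinv: "((\<lambda>q. matrix_inv (M q)) has_derivative Ai') (at (q t))"
    using Minv_deriv[OF M_C2 M_pd] by (simp add: Ai'_def)
  have blAi: "bounded_linear Ai'" using dMinv has_derivative_bounded_linear by blast
  have Aisc: "\<And>c x. Ai' (c *\<^sub>R x) = c *\<^sub>R Ai' x"
    using linear_cmul[OF bounded_linear.linear[OF blAi]] by blast
  have KIsym: "transpose KI = KI" using KI_pd pos_def_def by blast
  have KDsym: "transpose KD = KD" using KD_psd psd_def by blast
  have Asym: "transpose A = A" using Minv_sym[OF M_C2 M_pd] by (simp add: A_def)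
  have qv: "q' t = A *v p t" using eq_q grad_Ham_p[OF M_C2 M_pd] by (simp add: A_def)
  have Yq: "((\<lambda>qq. (yout M qq (p t) :: (real,'m) vec)) has_derivative
              (\<lambda>h. transpose G *v (Ai' h *v p t))) (at (q t))"
  proof -
    have "((\<lambda>qq. transpose G *v (matrix_inv (M qq) *v p t)) has_derivative
           (\<lambda>h. transpose G *v (matrix_inv (M (q t)) *v 0 + Ai' h *v p t))) (at (q t))"
      by (intro derivative_intros dMinv)
    then show ?thesis by (simp add: yout_def G_def)
  qed
  have Jyh: "\<And>h. Jy *v h = transpose G *v (Ai' h *v p t)"
    unfolding Jy_def by (rule jac_mv[OF Yq])
  have yder: "((\<lambda>s. (yout M (q s) (p s) :: (real,'m) vec)) has_vector_derivative
                (transpose G *v (A *v p' t + Ai' (q' t) *v p t))) (at t within {0..T})"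
  proof -
    have dq': "(q has_derivative (\<lambda>h. h *\<^sub>R q' t)) (at t within {0..T})"
      using dq has_vector_derivative_def by blast
    have dp': "(p has_derivative (\<lambda>h. h *\<^sub>R p' t)) (at t within {0..T})"
      using dp has_vector_derivative_def by blast
    have c: "((\<lambda>s. matrix_inv (M (q s))) has_derivative (\<lambda>h. Ai' (h *\<^sub>R q' t))) (at t within {0..T})"
      by (rule has_derivative_compose[OF dq' dMinv])
    have "((\<lambda>s. transpose G *v (matrix_inv (M (q s)) *v p s)) has_derivative
            (\<lambda>h. transpose G *v (matrix_inv (M (q t)) *v (h *\<^sub>R p' t) + Ai' (h *\<^sub>R q' t) *v p t)))
           (at t within {0..T})"
      by (intro derivative_intros c dp')
    moreover have "(\<lambda>h. transpose G *v (matrix_inv (M (q t)) *v (h *\<^sub>R p' t) + Ai' (h *\<^sub>R q' t) *v p t))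
        = (\<lambda>h. h *\<^sub>R (transpose G *v (A *v p' t + Ai' (q' t) *v p t)))"
      by (rule ext) (simp add: A_def Aisc mv_scaleR_right mv_scaleR_left mv_add_right scaleR_add_right
            del: scaleR_matrix_vector_assoc)
    ultimately show ?thesis unfolding has_vector_derivative_def by (simp add: yout_def G_def)
  qed
  have y'eq: "y' t = Jy *v (A *v p t) + transpose G *v (A *v p' t)"
  proof -
    have "y' t = transpose G *v (A *v p' t + Ai' (q' t) *v p t)"
      using vector_derivative_unique_within_closed_interval[of 0 T t, OF T _ _ _] dy yder t
      by auto
    then show ?thesis by (simp add: Jyh qv mv_add_right add.commute)
  qed
  have Ninv: "\<And>qq. matrix_inv (Md M KD qq) = matrix_inv (M qq) + matrix_inv (M qq) ** G ** KD ** transpose G ** matrix_inv (M qq)"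
    unfolding Md_def G_def using Md_inv_eq(1)[OF M_pd KD_psd] by blast
  have Nsym: "\<And>qq. transpose (matrix_inv (Md M KD qq)) = matrix_inv (Md M KD qq)"
    unfolding Ninv using Md_inv_eq(2)[OF M_pd KD_psd] by blast
  have Hd_eq: "\<And>qq pp. Hd M KD KI \<kappa> U qq pp = Ham M U qq pp
       + 1/2 * ((yout M qq pp :: (real,'m) vec) \<bullet> (KD *v yout M qq pp))
       + 1/2 * ((transpose G *v qq + \<kappa>) \<bullet> (KI *v (transpose G *v qq + \<kappa>)))"
  proof -
    fix qq pp
    let ?A = "matrix_inv (M qq)"
    have "pp \<bullet> (matrix_inv (Md M KD qq) *v pp) = pp \<bullet> (?A *v pp)
          + pp \<bullet> (?A *v (G *v (KD *v (transpose G *v (?A *v pp)))))"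
      by (simp add: Ninv mv_add_left matrix_vector_mul_assoc[symmetric] inner_add_right)
    also have "pp \<bullet> (?A *v (G *v (KD *v (transpose G *v (?A *v pp)))))
        = (transpose G *v (?A *v pp)) \<bullet> (KD *v (transpose G *v (?A *v pp)))"
      using sym_inner[OF Minv_sym[OF M_C2 M_pd]] inner_G_swap by metis
    finally show "Hd M KD KI \<kappa> U qq pp = Ham M U qq pp
       + 1/2 * ((yout M qq pp :: (real,'m) vec) \<bullet> (KD *v yout M qq pp))
       + 1/2 * ((transpose G *v qq + \<kappa>) \<bullet> (KI *v (transpose G *v qq + \<kappa>)))"
      by (simp add: Hd_def Ud_def Ham_def yout_def G_def algebra_simps)
  qed
  have gpHd: "grad (\<lambda>pp. Hd M KD KI \<kappa> U (q t) pp) (p t) = matrix_inv (Md M KD (q t)) *v p t"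
  proof (rule grad_by_inner)
    show "((\<lambda>pp. Hd M KD KI \<kappa> U (q t) pp) has_derivative (\<lambda>h. (matrix_inv (Md M KD (q t)) *v p t) \<bullet> h)) (at (p t))"
      unfolding Hd_def by (rule quad_deriv[OF Nsym])
  qed
  let ?y = "transpose G *v (A *v p t)"
  let ?z = "transpose G *v q t + \<kappa>"
  have gHd: "grad (\<lambda>qq. Hd M KD KI \<kappa> U qq (p t)) (q t)
       = gq + transpose Jy *v (KD *v ?y) + G *v (KI *v ?z)"
  proof (rule grad_by_inner)
    have dH: "((\<lambda>qq. Ham M U qq (p t)) has_derivative
       (\<lambda>h. 1/2 * (p t \<bullet> (Ai' h *v p t)) + frechet_derivative U (at (q t)) h)) (at (q t))"
      using Ham_q_deriv[OF M_C2 M_pd U_C2] by (simp add: Ai'_def)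
    have gqh: "\<And>h. gq \<bullet> h = 1/2 * (p t \<bullet> (Ai' h *v p t)) + frechet_derivative U (at (q t)) h"
      unfolding gq_def by (rule grad_inner[OF dH])
    have yt: "(yout M (q t) (p t) :: (real,'m) vec) = ?y" by (simp add: yout_def G_def A_def)
    have "((\<lambda>qq. Ham M U qq (p t)
       + 1/2 * ((yout M qq (p t) :: (real,'m) vec) \<bullet> (KD *v yout M qq (p t)))
       + 1/2 * ((transpose G *v qq + \<kappa>) \<bullet> (KI *v (transpose G *v qq + \<kappa>)))) has_derivative
       (\<lambda>h. (1/2 * (p t \<bullet> (Ai' h *v p t)) + frechet_derivative U (at (q t)) h)
          + 1/2 * ((yout M (q t) (p t) :: (real,'m) vec) \<bullet> (KD *v (transpose G *v (Ai' h *v p t)))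
                   + (transpose G *v (Ai' h *v p t)) \<bullet> (KD *v yout M (q t) (p t)))
          + 1/2 * (?z \<bullet> (KI *v (transpose G *v h + 0)) + (transpose G *v h + 0) \<bullet> (KI *v ?z))))
       (at (q t))"
      by (intro derivative_intros dH Yq)
    moreover have "(\<lambda>h. (1/2 * (p t \<bullet> (Ai' h *v p t)) + frechet_derivative U (at (q t)) h)
          + 1/2 * ((yout M (q t) (p t) :: (real,'m) vec) \<bullet> (KD *v (transpose G *v (Ai' h *v p t)))
                   + (transpose G *v (Ai' h *v p t)) \<bullet> (KD *v yout M (q t) (p t)))
          + 1/2 * (?z \<bullet> (KI *v (transpose G *v h + 0)) + (transpose G *v h + 0) \<bullet> (KI *v ?z)))
        = (\<lambda>h. (gq + transpose Jy *v (KD *v ?y) + G *v (KI *v ?z)) \<bullet> h)"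
    proof (rule ext)
      fix h
      have "(transpose Jy *v (KD *v ?y)) \<bullet> h = (Jy *v h) \<bullet> (KD *v ?y)"
        by (metis inner_commute inner_mv_transpose)
      then have e1: "(transpose Jy *v (KD *v ?y)) \<bullet> h = (transpose G *v (Ai' h *v p t)) \<bullet> (KD *v ?y)"
        by (simp only: Jyh)
      have e2: "(G *v (KI *v ?z)) \<bullet> h = (transpose G *v h) \<bullet> (KI *v ?z)"
        by (metis inner_commute inner_mv_transpose transpose_transpose)
      have e3: "?y \<bullet> (KD *v (transpose G *v (Ai' h *v p t))) = (transpose G *v (Ai' h *v p t)) \<bullet> (KD *v ?y)"
        using sym_inner[OF KDsym] by (metis inner_commute)
      have e4: "?z \<bullet> (KI *v (transpose G *v h)) = (transpose G *v h) \<bullet> (KI *v ?z)"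
        using sym_inner[OF KIsym] by (metis inner_commute)
      show "(1/2 * (p t \<bullet> (Ai' h *v p t)) + frechet_derivative U (at (q t)) h)
          + 1/2 * ((yout M (q t) (p t) :: (real,'m) vec) \<bullet> (KD *v (transpose G *v (Ai' h *v p t)))
                   + (transpose G *v (Ai' h *v p t)) \<bullet> (KD *v yout M (q t) (p t)))
          + 1/2 * (?z \<bullet> (KI *v (transpose G *v h + 0)) + (transpose G *v h + 0) \<bullet> (KI *v ?z))
        = (gq + transpose Jy *v (KD *v ?y) + G *v (KI *v ?z)) \<bullet> h"
        unfolding yt add_0_right e3 e4 by (simp add: inner_add_left e1 e2 gqh)
    qed
    ultimately show "((\<lambda>qq. Hd M KD KI \<kappa> U qq (p t)) has_derivative
        (\<lambda>h. (gq + transpose Jy *v (KD *v ?y) + G *v (KI *v ?z)) \<bullet> h)) (at (q t))"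
      unfolding Hd_eq by simp
  qed
  have ode: "p' t = - gq - D (q t) (p t) *v (A *v p t) + G *v (- (KP *v (transpose G *v (A *v p t))) - KI *v ?z - KD *v y' t)"
    using eq_p grad_Ham_p[OF M_C2 M_pd] by (simp add: gq_def A_def G_def yout_def)
  note R = part3_alg[where Mq = "M (q t)" and KD = KD and Jy = Jy and pt = "p t" and p' = "p' t"
      and G = G and gq = gq and Dq = "D (q t) (p t)" and KP = KP and KI = KI and z = ?z and yd = "y' t",
      folded A_def, OF M_pd KD_psd y'eq ode]
  show "q' t = matrix_inv (M (q t)) ** Md M KD (q t)
                     *v grad (\<lambda>pp. Hd M KD KI \<kappa> U (q t) pp) (p t)
          \<and> p' t = - (Md M KD (q t) ** matrix_inv (M (q t))
                       *v grad (\<lambda>qq. Hd M KD KI \<kappa> U qq (p t)) (q t))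
                   + (Jm M KD (q t) (p t) - Ddm M D KP KD (q t) (p t))
                       *v grad (\<lambda>pp. Hd M KD KI \<kappa> U (q t) pp) (p t)"
  proof
    show "q' t = matrix_inv (M (q t)) ** Md M KD (q t)
                     *v grad (\<lambda>pp. Hd M KD KI \<kappa> U (q t) pp) (p t)"
      unfolding gpHd qv using R(2) by (simp add: Md_def G_def A_def)
    show "p' t = - (Md M KD (q t) ** matrix_inv (M (q t))
                       *v grad (\<lambda>qq. Hd M KD KI \<kappa> U qq (p t)) (q t))
                   + (Jm M KD (q t) (p t) - Ddm M D KP KD (q t) (p t))
                       *v grad (\<lambda>pp. Hd M KD KI \<kappa> U (q t) pp) (p t)"
      unfolding gpHd gHd using R(3)
      by (simp add: Md_def G_def A_def Jm_def Ddm_def Em_def Bm_def Jy_def)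
  qed
qed

context
  fixes U :: "real^'n \<Rightarrow> real"
  assumes U_C2: "C2 U"
begin

lemma U1_deriv:
  "((\<lambda>z. frechet_derivative U (at z) v) has_derivative
     frechet_derivative (\<lambda>z. frechet_derivative U (at z) v) (at x)) (at x)"
  using U_C2 unfolding C2_def by (simp add: frechet_derivative_works)

lemma U1_bl: "bounded_linear (frechet_derivative U (at z))"
  using C2_has_derivative[OF U_C2] has_derivative_bounded_linear by blast

lemma U2_bl: "bounded_linear (frechet_derivative (\<lambda>z. frechet_derivative U (at z) v) (at x))"
  using U1_deriv has_derivative_bounded_linear by blast

lemma hess_entry:
  "hess U x $ i $ j = frechet_derivative (\<lambda>z. frechet_derivative U (at z) (axis i 1)) (at x) (axis j 1)"
  by (simp add: hess_def jac_def grad_def)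

lemma U2_lin1:
  "frechet_derivative (\<lambda>z. frechet_derivative U (at z) h) (at x) w
     = (\<Sum>i\<in>UNIV. h $ i * frechet_derivative (\<lambda>z. frechet_derivative U (at z) (axis i 1)) (at x) w)"
proof -
  have eq: "(\<lambda>z. frechet_derivative U (at z) h) = (\<lambda>z. \<Sum>i\<in>UNIV. h $ i * frechet_derivative U (at z) (axis i 1))"
  proof (rule ext)
    fix z
    have "frechet_derivative U (at z) h = (\<Sum>i\<in>UNIV. h $ i *\<^sub>R frechet_derivative U (at z) (axis i 1))"
      by (rule linear_expand[OF U1_bl])
    then show "frechet_derivative U (at z) h = (\<Sum>i\<in>UNIV. h $ i * frechet_derivative U (at z) (axis i 1))"
      by (simp only: real_scaleR_def)
  qed
  have "((\<lambda>z. \<Sum>i\<in>UNIV. h $ i * frechet_derivative U (at z) (axis i 1)) has_derivative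
     (\<lambda>w. \<Sum>i\<in>UNIV. h $ i * frechet_derivative (\<lambda>z. frechet_derivative U (at z) (axis i 1)) (at x) w)) (at x)"
    by (intro has_derivative_sum has_derivative_mult_right U1_deriv)
  then have "(\<lambda>w. \<Sum>i\<in>UNIV. h $ i * frechet_derivative (\<lambda>z. frechet_derivative U (at z) (axis i 1)) (at x) w)
     = frechet_derivative (\<lambda>z. frechet_derivative U (at z) h) (at x)"
    unfolding eq by (rule frechet_derivative_at)
  then show ?thesis by (simp add: fun_eq_iff)
qed

lemma hess_quad:
  "h \<bullet> (hess U x *v h) = frechet_derivative (\<lambda>z. frechet_derivative U (at z) h) (at x) h"
proof -
  have row: "(hess U x *v h) $ i = frechet_derivative (\<lambda>z. frechet_derivative U (at z) (axis i 1)) (at x) h" for i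
  proof -
    have "(hess U x *v h) $ i = (\<Sum>j\<in>UNIV. h $ j * frechet_derivative (\<lambda>z. frechet_derivative U (at z) (axis i 1)) (at x) (axis j 1))"
      by (simp add: matrix_vector_mult_def hess_entry mult.commute)
    also have "\<dots> = frechet_derivative (\<lambda>z. frechet_derivative U (at z) (axis i 1)) (at x) h"
      using linear_expand[OF U2_bl[where v = "axis i 1" and x = x], of h] by (simp only: real_scaleR_def)
    finally show ?thesis .
  qed
  show ?thesis unfolding U2_lin1[of h x h] by (simp add: inner_vec_def row)
qed

lemma hess_cont: "isCont (\<lambda>x. hess U x) x"
proof -
  have c: "isCont (\<lambda>x. frechet_derivative (\<lambda>z. frechet_derivative U (at z) v) (at x) w) x" for v w
    using U_C2 unfolding C2_def by (simp add: continuous_on_eq_continuous_at)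
  have eq: "(\<lambda>x. hess U x) = (\<lambda>x. \<chi> i j. frechet_derivative (\<lambda>z. frechet_derivative U (at z) (axis i 1)) (at x) (axis j 1))"
    by (simp add: fun_eq_iff vec_eq_iff hess_entry)
  show ?thesis unfolding eq isCont_def
    by (intro tendsto_vec_lambda c[unfolded isCont_def, simplified])
qed

end

lemma bl_mv: "bounded_linear (\<lambda>h. (A::real^'n^'m) *v h)"
  using bounded_bilinear.bounded_linear_right[OF mv_bilinear] by simp

lemma mv_pos_bound: "\<exists>K>0. \<forall>(A::real^'n^'m) x. norm (A *v x) \<le> norm A * norm x * K"
  using bounded_bilinear.pos_bounded[OF mv_bilinear] by simp

lemma pd_lower_bound:
  fixes H :: "real^'n^'n"
  assumes "pos_def H"
  shows "\<exists>c>0. \<forall>h. c * (norm h)^2 \<le> h \<bullet> (H *v h)"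
proof -
  have comp: "compact (sphere (0::real^'n) 1)" by simp
  have ne: "sphere (0::real^'n) 1 \<noteq> {}" by simp
  have cont: "continuous_on (sphere (0::real^'n) 1) (\<lambda>h. h \<bullet> (H *v h))"
    by (intro continuous_on_inner continuous_on_id linear_continuous_on bl_mv)
  obtain h0 where h0: "h0 \<in> sphere 0 1" and min: "\<forall>y\<in>sphere 0 1. h0 \<bullet> (H *v h0) \<le> y \<bullet> (H *v y)"
    using continuous_attains_inf[OF comp ne cont] by blast
  have "h0 \<noteq> 0" using h0 by auto
  then have cpos: "h0 \<bullet> (H *v h0) > 0" using assms pos_def_def by blast
  have "c * (norm h)^2 \<le> h \<bullet> (H *v h)" if c: "c = h0 \<bullet> (H *v h0)" for c h
  proof (cases "h = 0")
    case True then show ?thesis by simp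
  next
    case False
    let ?u = "(1 / norm h) *\<^sub>R h"
    have "?u \<in> sphere 0 1" using False by simp
    then have "c \<le> ?u \<bullet> (H *v ?u)" using min c by blast
    also have "?u \<bullet> (H *v ?u) = (h \<bullet> (H *v h)) / (norm h)^2"
      by (simp add: matrix_scaleR_vector_ac scaleR_matrix_vector_assoc[symmetric] power2_eq_square)
    finally show ?thesis using False by (simp add: pos_le_divide_eq)
  qed
  then show ?thesis using cpos by blast
qed

lemma Ud_strict_min:
  fixes U :: "(real,'n::{finite,linorder}) vec \<Rightarrow> real"
    and KI :: "((real,'m::{finite,linorder}) vec,'m) vec"
    and qs :: "(real,'n) vec" and \<kappa> :: "(real,'m) vec"
  assumes U_C2: "C2 U" and KI_pd: "pos_def KI"
    and Hpd: "pos_def (hess U qs + (Gmat :: ((real,'m) vec,'n) vec) ** KI ** transpose Gmat)"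
    and crit: "(Gmat :: ((real,'m) vec,'n) vec) *v (KI *v (transpose Gmat *v qs + \<kappa>)) + grad U qs = 0"
  shows "\<exists>r>0. \<forall>q. 0 < norm (q - qs) \<and> norm (q - qs) \<le> r \<longrightarrow> Ud KI \<kappa> U qs < Ud KI \<kappa> U q"
proof -
  define G where "G = (Gmat :: ((real,'m) vec,'n) vec)"
  define Q where "Q = G ** KI ** transpose G"
  define H0 where "H0 = hess U qs + Q"
  have KIsym: "transpose KI = KI" using KI_pd pos_def_def by blast
  obtain c where c: "c > 0" "\<And>h. c * (norm h)^2 \<le> h \<bullet> (H0 *v h)"
    using pd_lower_bound[OF Hpd[folded G_def, folded Q_def, folded H0_def]] by blast
  obtain K where K: "K > 0" "\<And>(A::((real,'n) vec,'n) vec) x. norm (A *v x) \<le> norm A * norm x * K"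
    using mv_pos_bound by blast
  have "\<exists>d>0. \<forall>x. dist x qs < d \<longrightarrow> dist (hess U x) (hess U qs) < c / K"
  proof -
    have "continuous (at qs) (\<lambda>x. hess U x)" using hess_cont[OF U_C2, of qs] by simp
    then show ?thesis using c(1) K(1) unfolding continuous_at_eps_delta by simp
  qed
  then obtain r where r: "r > 0" "\<And>x. dist x qs < r \<Longrightarrow> dist (hess U x) (hess U qs) < c / K"
    by blast
  have posH: "h \<bullet> ((hess U x + Q) *v h) > 0" if x: "dist x qs < r" and h: "h \<noteq> 0" for x h
  proof -
    let ?D = "hess U x - hess U qs"
    have split: "h \<bullet> ((hess U x + Q) *v h) = h \<bullet> (H0 *v h) + h \<bullet> (?D *v h)"
      by (simp add: H0_def mv_add_left mv_diff_left inner_add_right inner_diff_right)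
    have a: "c * (norm h)^2 \<le> h \<bullet> (H0 *v h)" using c(2) .
    have b: "\<bar>h \<bullet> (?D *v h)\<bar> \<le> norm h * (norm ?D * norm h * K)"
      using Cauchy_Schwarz_ineq2[of h "?D *v h"] K(2)[of ?D h]
      by (meson mult_left_mono norm_ge_zero order_trans)
    have nD: "norm ?D * K < c" using r(2)[OF x] K(1) by (simp add: dist_norm pos_less_divide_eq)
    have nh: "norm h > 0" using h by simp
    have "norm h * (norm ?D * norm h * K) = (norm ?D * K) * (norm h)^2"
      by (simp add: power2_eq_square)
    also have "\<dots> < c * (norm h)^2" using nD nh by simp
    finally have d: "norm h * (norm ?D * norm h * K) < c * (norm h)^2" .
    show ?thesis using split a b d by linarith
  qed
  show ?thesis
  proof (intro exI[of _ "r/2"] conjI allI impI)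
    show "r / 2 > 0" using r(1) by simp
    fix q :: "(real,'n) vec"
    assume qq: "0 < norm (q - qs) \<and> norm (q - qs) \<le> r / 2"
    define h where "h = q - qs"
    have h0: "h \<noteq> 0" using qq h_def by auto
    define Z where "Z t = transpose G *v (qs + t *\<^sub>R h) + \<kappa>" for t
    define g where "g t = Ud KI \<kappa> U (qs + t *\<^sub>R h)" for t
    define \<phi> where "\<phi> t = frechet_derivative U (at (qs + t *\<^sub>R h)) h + (transpose G *v h) \<bullet> (KI *v Z t)" for t
    define \<psi> where "\<psi> t = frechet_derivative (\<lambda>z. frechet_derivative U (at z) h) (at (qs + t *\<^sub>R h)) h
                      + (transpose G *v h) \<bullet> (KI *v (transpose G *v h))" for t
    have p1: "((\<lambda>t. qs + t *\<^sub>R h) has_derivative (\<lambda>s. s *\<^sub>R h)) (at t)" for t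
      by (auto intro!: derivative_eq_intros)
    have p2: "(Z has_derivative (\<lambda>s. s *\<^sub>R (transpose G *v h))) (at t)" for t
    proof -
      have "((\<lambda>t. transpose G *v (qs + t *\<^sub>R h) + \<kappa>) has_derivative (\<lambda>s. transpose G *v (s *\<^sub>R h) + 0)) (at t)"
        by (intro has_derivative_add has_derivative_mv_const p1 has_derivative_const)
      then show ?thesis unfolding Z_def[abs_def] by (simp add: mv_scaleR_right)
    qed
    have U1sc: "\<And>z s v. frechet_derivative U (at z) (s *\<^sub>R v) = s * frechet_derivative U (at z) v"
      using linear_cmul[OF bounded_linear.linear[OF U1_bl[OF U_C2]]] by simp
    have U2sc: "\<And>z s v w. frechet_derivative (\<lambda>z. frechet_derivative U (at z) w) (at z) (s *\<^sub>R v)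
          = s * frechet_derivative (\<lambda>z. frechet_derivative U (at z) w) (at z) v"
      using linear_cmul[OF bounded_linear.linear[OF U2_bl[OF U_C2]]] by simp
    have symKI: "\<And>a b. a \<bullet> (KI *v b) = b \<bullet> (KI *v a)"
      using sym_inner[OF KIsym] by (metis inner_commute)
    have dg: "(g has_real_derivative \<phi> t) (at t)" for t
    proof -
      have "((\<lambda>t. 1/2 * (Z t \<bullet> (KI *v Z t)) + U (qs + t *\<^sub>R h)) has_derivative
             (\<lambda>s. 1/2 * (Z t \<bullet> (KI *v (s *\<^sub>R (transpose G *v h))) + (s *\<^sub>R (transpose G *v h)) \<bullet> (KI *v Z t))
                 + frechet_derivative U (at (qs + t *\<^sub>R h)) (s *\<^sub>R h))) (at t)"
        by (intro has_derivative_add has_derivative_mult_right has_derivative_inner p2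
              has_derivative_mv_const has_derivative_compose[OF p1 C2_has_derivative[OF U_C2]])
      moreover have "(\<lambda>s. 1/2 * (Z t \<bullet> (KI *v (s *\<^sub>R (transpose G *v h))) + (s *\<^sub>R (transpose G *v h)) \<bullet> (KI *v Z t))
                 + frechet_derivative U (at (qs + t *\<^sub>R h)) (s *\<^sub>R h)) = (*) (\<phi> t)"
        by (rule ext) (simp add: \<phi>_def U1sc mv_scaleR_right symKI[of "Z t"] algebra_simps)
      ultimately show ?thesis
        unfolding has_field_derivative_def g_def[abs_def] Ud_def Z_def by (simp add: G_def)
    qed
    have d\<phi>: "(\<phi> has_real_derivative \<psi> t) (at t)" for t
    proof -
      have "((\<lambda>t. frechet_derivative U (at (qs + t *\<^sub>R h)) h + (transpose G *v h) \<bullet> (KI *v Z t)) has_derivative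
             (\<lambda>s. frechet_derivative (\<lambda>z. frechet_derivative U (at z) h) (at (qs + t *\<^sub>R h)) (s *\<^sub>R h)
                 + ((transpose G *v h) \<bullet> (KI *v (s *\<^sub>R (transpose G *v h))) + 0 \<bullet> (KI *v Z t)))) (at t)"
        by (intro has_derivative_add has_derivative_inner has_derivative_const
              has_derivative_mv_const p2 has_derivative_compose[OF p1 U1_deriv[OF U_C2]])
      moreover have "(\<lambda>s. frechet_derivative (\<lambda>z. frechet_derivative U (at z) h) (at (qs + t *\<^sub>R h)) (s *\<^sub>R h)
                 + ((transpose G *v h) \<bullet> (KI *v (s *\<^sub>R (transpose G *v h))) + 0 \<bullet> (KI *v Z t))) = (*) (\<psi> t)"
        by (rule ext) (simp add: \<psi>_def U2sc mv_scaleR_right algebra_simps)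
      ultimately show ?thesis
        unfolding has_field_derivative_def \<phi>_def[abs_def] by simp
    qed
    have \<psi>pos: "\<psi> t > 0" if t: "0 \<le> t" "t \<le> 1" for t
    proof -
      let ?x = "qs + t *\<^sub>R h"
      have "dist ?x qs = t * norm h" using t by (simp add: dist_norm)
      also have "\<dots> \<le> norm h" using t by (simp add: mult_left_le_one_le)
      also have "\<dots> < r" using qq r(1) h_def by simp
      finally have dx: "dist ?x qs < r" .
      have "h \<bullet> (Q *v h) = (transpose G *v h) \<bullet> (KI *v (transpose G *v h))"
        by (simp add: Q_def matrix_vector_mul_assoc[symmetric] inner_G_swap)
      then have "\<psi> t = h \<bullet> ((hess U ?x + Q) *v h)"
        by (simp add: \<psi>_def mv_add_left inner_add_right hess_quad[OF U_C2])
      then show ?thesis using posH[OF dx h0] by simp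
    qed
    have \<phi>0: "\<phi> 0 = 0"
    proof -
      have "\<phi> 0 = grad U qs \<bullet> h + h \<bullet> (G *v (KI *v (transpose G *v qs + \<kappa>)))"
        by (simp add: \<phi>_def Z_def grad_inner[OF C2_has_derivative[OF U_C2]] inner_G_swap)
      also have "\<dots> = (G *v (KI *v (transpose G *v qs + \<kappa>)) + grad U qs) \<bullet> h"
        by (simp add: inner_add_left inner_add_right inner_commute)
      also have "\<dots> = 0" using crit by (simp add: G_def)
      finally show ?thesis .
    qed
    obtain \<xi> where \<xi>: "0 < \<xi>" "\<xi> < 1" "g 1 - g 0 = (1 - 0) * \<phi> \<xi>"
      using MVT2[of 0 1 g \<phi>] dg by auto
    obtain \<eta> where \<eta>: "0 < \<eta>" "\<eta> < \<xi>" "\<phi> \<xi> - \<phi> 0 = (\<xi> - 0) * \<psi> \<eta>"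
      using MVT2[of 0 \<xi> \<phi> \<psi>] d\<phi> \<xi>(1) by auto
    have "\<psi> \<eta> > 0" using \<psi>pos \<eta> \<xi> by simp
    then have "\<phi> \<xi> > 0" using \<eta> \<xi> \<phi>0 by simp
    then have "g 0 < g 1" using \<xi> by simp
    then show "Ud KI \<kappa> U qs < Ud KI \<kappa> U q" by (simp add: g_def h_def)
  qed
qed

definition Vfun :: "((real,'n::{finite,linorder}) vec \<Rightarrow> ((real,'n) vec,'n) vec) \<Rightarrow> ((real,'n) vec \<Rightarrow> real)
   \<Rightarrow> ((real,'m::{finite,linorder}) vec,'m) vec \<Rightarrow> ((real,'m) vec,'m) vec \<Rightarrow> (real,'m) vec
   \<Rightarrow> (real,'n) vec \<Rightarrow> (real,'n) vec \<Rightarrow> real" where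
  "Vfun M U KD KI \<kappa> q p = Ham M U q p + 1/2 * ((yout M q p :: (real,'m) vec) \<bullet> (KD *v yout M q p))
     + 1/2 * ((transpose (Gmat :: ((real,'m) vec,'n) vec) *v q + \<kappa>) \<bullet> (KI *v (transpose Gmat *v q + \<kappa>)))"

lemma Vfun_Ud: "Vfun M U KD KI \<kappa> q p = Ud KI \<kappa> U q + 1/2 * (p \<bullet> (matrix_inv (M q) *v p))
     + 1/2 * ((yout M q p :: (real,'m::{finite,linorder}) vec) \<bullet> (KD *v yout M q p))"
  by (simp add: Vfun_def Ud_def Ham_def algebra_simps)

lemma continuous_mv [continuous_intros]:
  fixes f :: "'a::t2_space \<Rightarrow> real^'n^'m" and g :: "'a \<Rightarrow> real^'n"
  assumes "continuous F f" "continuous F g"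
  shows "continuous F (\<lambda>x. f x *v g x)"
  using bounded_bilinear.continuous[OF mv_bilinear assms] by simp

lemma Vfun_cont:
  fixes M :: "(real,'n::{finite,linorder}) vec \<Rightarrow> ((real,'n) vec,'n) vec"
    and U :: "(real,'n) vec \<Rightarrow> real"
    and KI KD :: "((real,'m::{finite,linorder}) vec,'m) vec"
  assumes M_C2: "C2 M" and M_pd: "\<And>q. pos_def (M q)" and U_C2: "C2 U"
  shows "continuous_on UNIV (\<lambda>x. Vfun M U KD KI \<kappa> (fst x) (snd x))"
proof (rule continuous_at_imp_continuous_on, intro ballI)
  fix x :: "(real,'n) vec \<times> (real,'n) vec"
  have cM: "continuous (at x) (\<lambda>x. matrix_inv (M (fst x)))"
    using continuous_at_compose[of x fst "\<lambda>q. matrix_inv (M q)"] Minv_cont[OF M_C2 M_pd, of "fst x"]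
      continuous_fst[OF continuous_ident] by (simp add: o_def)
  have cU: "continuous (at x) (\<lambda>x. U (fst x))"
  proof -
    have "isCont U (fst x)" using C2_has_derivative[OF U_C2] has_derivative_continuous by blast
    then show ?thesis
      using continuous_at_compose[of x fst U] continuous_fst[OF continuous_ident] by (simp add: o_def)
  qed
  show "continuous (at x) (\<lambda>x. Vfun M U KD KI \<kappa> (fst x) (snd x))"
    unfolding Vfun_def Ham_def yout_def
    by (intro continuous_intros cM cU)
qed

lemma Vfun_deriv:
  fixes M :: "(real,'n::{finite,linorder}) vec \<Rightarrow> ((real,'n) vec,'n) vec"
    and D :: "(real,'n) vec \<Rightarrow> (real,'n) vec \<Rightarrow> ((real,'n) vec,'n) vec"
    and U :: "(real,'n) vec \<Rightarrow> real"
    and KP KI KD :: "((real,'m::{finite,linorder}) vec,'m) vec"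
    and \<kappa> :: "(real,'m) vec"
  assumes M_C2: "C2 M" and M_pd: "\<And>q. pos_def (M q)" and U_C2: "C2 U"
    and D_psd: "\<And>q p. psd (D q p)" and KP_psd: "psd KP" and KI_pd: "pos_def KI" and KD_psd: "psd KD"
    and sol: "cl_solution M D U KP KI KD \<kappa> T q p q' p'" and s: "s \<in> {0..T}"
  shows "\<exists>d. ((\<lambda>s. Vfun M U KD KI \<kappa> (q s) (p s)) has_real_derivative d) (at s within {0..T}) \<and> d \<le> 0"
proof -
  from sol obtain y' :: "real \<Rightarrow> (real,'m) vec" where T: "T > 0" and H: "\<forall>t\<in>{0..T}.
        (q has_vector_derivative q' t) (at t within {0..T}) \<and>
        (p has_vector_derivative p' t) (at t within {0..T}) \<and>
        ((\<lambda>s. (yout M (q s) (p s) :: (real,'m) vec)) has_vector_derivative y' t) (at t within {0..T}) \<and>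
        q' t = grad (\<lambda>pp. Ham M U (q t) pp) (p t) \<and>
        p' t = - grad (\<lambda>qq. Ham M U qq (p t)) (q t)
               - D (q t) (p t) *v grad (\<lambda>pp. Ham M U (q t) pp) (p t)
               + Gmat *v (- (KP *v yout M (q t) (p t))
                          - (KI *v (transpose Gmat *v q t + \<kappa>))
                          - (KD *v y' t))"
    unfolding cl_solution_def by blast
  from bspec[OF H s] have dq: "(q has_vector_derivative q' s) (at s within {0..T})"
    and dp: "(p has_vector_derivative p' s) (at s within {0..T})"
    and dy: "((\<lambda>s. (yout M (q s) (p s) :: (real,'m) vec)) has_vector_derivative y' s) (at s within {0..T})"
    and eq_q: "q' s = grad (\<lambda>pp. Ham M U (q s) pp) (p s)"
    and eq_p: "p' s = - grad (\<lambda>qq. Ham M U qq (p s)) (q s)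
               - D (q s) (p s) *v grad (\<lambda>pp. Ham M U (q s) pp) (p s)
               + Gmat *v (- (KP *v yout M (q s) (p s))
                          - (KI *v (transpose Gmat *v q s + \<kappa>))
                          - (KD *v y' s))" by blast+
  define A where "A = matrix_inv (M (q s))"
  define Ai' where "Ai' = frechet_derivative (\<lambda>q. matrix_inv (M q)) (at (q s))"
  define U' where "U' = frechet_derivative U (at (q s))"
  define G where "G = (Gmat :: ((real,'m) vec,'n) vec)"
  define gq where "gq = grad (\<lambda>qq. Ham M U qq (p s)) (q s)"
  define v where "v = A *v p s"
  define Y where "Y = (transpose G *v v)"
  define Z where "Z = transpose G *v q s + \<kappa>"
  have dMinv: "((\<lambda>q. matrix_inv (M q)) has_derivative Ai') (at (q s))"
    using Minv_deriv[OF M_C2 M_pd] by (simp add: Ai'_def)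
  have blAi: "bounded_linear Ai'" using dMinv has_derivative_bounded_linear by blast
  have Aisc: "\<And>c x. Ai' (c *\<^sub>R x) = c *\<^sub>R Ai' x"
    using linear_cmul[OF bounded_linear.linear[OF blAi]] by blast
  have dU: "(U has_derivative U') (at (q s))" using C2_has_derivative[OF U_C2] by (simp add: U'_def)
  have U'sc: "\<And>c x. U' (c *\<^sub>R x) = c * U' x"
    using linear_cmul[OF bounded_linear.linear[OF has_derivative_bounded_linear[OF dU]]] by simp
  have KIsym: "transpose KI = KI" using KI_pd pos_def_def by blast
  have KDsym: "transpose KD = KD" using KD_psd psd_def by blast
  have Asym: "transpose A = A" using Minv_sym[OF M_C2 M_pd] by (simp add: A_def)
  have symKI: "\<And>a b. a \<bullet> (KI *v b) = b \<bullet> (KI *v a)"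
    using sym_inner[OF KIsym] by (metis inner_commute)
  have symKD: "\<And>a b. a \<bullet> (KD *v b) = b \<bullet> (KD *v a)"
    using sym_inner[OF KDsym] by (metis inner_commute)
  have symA: "\<And>a b. a \<bullet> (A *v b) = b \<bullet> (A *v a)"
    using sym_inner[OF Asym] by (metis inner_commute)
  have qv: "q' s = v" using eq_q grad_Ham_p[OF M_C2 M_pd] by (simp add: A_def v_def)
  have Ys: "(yout M (q s) (p s) :: (real,'m) vec) = Y" by (simp add: yout_def Y_def v_def A_def G_def)
  have gqh: "\<And>h. gq \<bullet> h = 1/2 * (p s \<bullet> (Ai' h *v p s)) + U' h"
    unfolding gq_def using grad_inner[OF Ham_q_deriv[OF M_C2 M_pd U_C2]] by (simp add: Ai'_def U'_def)
  have ode: "p' s = - gq - D (q s) (p s) *v v + G *v (- (KP *v Y) - KI *v Z - KD *v y' s)"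
    using eq_p grad_Ham_p[OF M_C2 M_pd] Ys by (simp add: gq_def A_def v_def G_def Z_def)
  have dq': "(q has_derivative (\<lambda>h. h *\<^sub>R q' s)) (at s within {0..T})"
    using dq has_vector_derivative_def by blast
  have dp': "(p has_derivative (\<lambda>h. h *\<^sub>R p' s)) (at s within {0..T})"
    using dp has_vector_derivative_def by blast
  have dy': "((\<lambda>s. (yout M (q s) (p s) :: (real,'m) vec)) has_derivative (\<lambda>h. h *\<^sub>R y' s)) (at s within {0..T})"
    using dy has_vector_derivative_def by blast
  have cM: "((\<lambda>s. matrix_inv (M (q s))) has_derivative (\<lambda>h. Ai' (h *\<^sub>R q' s))) (at s within {0..T})"
    by (rule has_derivative_compose[OF dq' dMinv])
  have cU: "((\<lambda>s. U (q s)) has_derivative (\<lambda>h. U' (h *\<^sub>R q' s))) (at s within {0..T})"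
    by (rule has_derivative_compose[OF dq' dU])
  have cZ: "((\<lambda>s. transpose G *v q s + \<kappa>) has_derivative (\<lambda>h. transpose G *v (h *\<^sub>R q' s) + 0)) (at s within {0..T})"
    by (intro has_derivative_add has_derivative_mv_const dq' has_derivative_const)
  let ?raw = "\<lambda>h. 1/2 * (p s \<bullet> (A *v (h *\<^sub>R p' s) + Ai' (h *\<^sub>R q' s) *v p s) + (h *\<^sub>R p' s) \<bullet> (A *v p s))
        + U' (h *\<^sub>R q' s)
        + 1/2 * (Y \<bullet> (KD *v (h *\<^sub>R y' s)) + (h *\<^sub>R y' s) \<bullet> (KD *v Y))
        + 1/2 * (Z \<bullet> (KI *v (transpose G *v (h *\<^sub>R q' s) + 0)) + (transpose G *v (h *\<^sub>R q' s) + 0) \<bullet> (KI *v Z))"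
  have raw: "((\<lambda>s. Vfun M U KD KI \<kappa> (q s) (p s)) has_derivative ?raw) (at s within {0..T})"
  proof -
    have "((\<lambda>s. 1/2 * (p s \<bullet> (matrix_inv (M (q s)) *v p s)) + U (q s)
        + 1/2 * ((yout M (q s) (p s) :: (real,'m) vec) \<bullet> (KD *v yout M (q s) (p s)))
        + 1/2 * ((transpose G *v q s + \<kappa>) \<bullet> (KI *v (transpose G *v q s + \<kappa>)))) has_derivative
        (\<lambda>h. 1/2 * (p s \<bullet> (matrix_inv (M (q s)) *v (h *\<^sub>R p' s) + Ai' (h *\<^sub>R q' s) *v p s) + (h *\<^sub>R p' s) \<bullet> (matrix_inv (M (q s)) *v p s))
        + U' (h *\<^sub>R q' s)
        + 1/2 * ((yout M (q s) (p s) :: (real,'m) vec) \<bullet> (KD *v (h *\<^sub>R y' s)) + (h *\<^sub>R y' s) \<bullet> (KD *v yout M (q s) (p s)))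
        + 1/2 * ((transpose G *v q s + \<kappa>) \<bullet> (KI *v (transpose G *v (h *\<^sub>R q' s) + 0)) + (transpose G *v (h *\<^sub>R q' s) + 0) \<bullet> (KI *v (transpose G *v q s + \<kappa>))))) (at s within {0..T})"
      by (intro has_derivative_add has_derivative_mult_right has_derivative_inner has_derivative_mv
            has_derivative_mv_const dp' dy' cM cU cZ)
    then show ?thesis unfolding Vfun_def Ham_def by (simp add: Ys A_def Z_def G_def)
  qed
  define d where "d = - (v \<bullet> (D (q s) (p s) *v v)) - Y \<bullet> (KP *v Y)"
  have raw_eq: "?raw = (\<lambda>h. d * h)"
  proof (rule ext)
    fix h
    have e1: "?raw h = h * (v \<bullet> p' s + gq \<bullet> q' s + y' s \<bullet> (KD *v Y) + (transpose G *v q' s) \<bullet> (KI *v Z))"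
      using symA[of "p s" "p' s"] symKD[of Y "y' s"] symKI[of Z "transpose G *v q' s"]
      by (simp add: gqh Aisc U'sc mv_scaleR_right mv_scaleR_left v_def algebra_simps inner_commute[of "p' s"])
    have e2: "v \<bullet> p' s + gq \<bullet> q' s + y' s \<bullet> (KD *v Y) + (transpose G *v q' s) \<bullet> (KI *v Z) = d"
    proof -
      have "v \<bullet> (G *v (- (KP *v Y) - KI *v Z - KD *v y' s)) = Y \<bullet> (- (KP *v Y) - KI *v Z - KD *v y' s)"
        by (simp add: inner_G_swap Y_def)
      then show ?thesis
        using symKD[of Y "y' s"]
        by (simp add: ode qv d_def inner_add_right inner_diff_right inner_commute[of v gq] Y_def[symmetric] algebra_simps)
    qed
    show "?raw h = d * h" using e1 e2 by simp
  qed
  have dle: "d \<le> 0"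
  proof -
    have "v \<bullet> (D (q s) (p s) *v v) \<ge> 0" using D_psd psd_def by blast
    moreover have "Y \<bullet> (KP *v Y) \<ge> 0" using KP_psd psd_def by blast
    ultimately show ?thesis by (simp add: d_def)
  qed
  show ?thesis
    using raw raw_eq dle unfolding has_field_derivative_def by (metis mult.commute)
qed

lemma Vfun_decr:
  fixes M :: "(real,'n::{finite,linorder}) vec \<Rightarrow> ((real,'n) vec,'n) vec"
    and D :: "(real,'n) vec \<Rightarrow> (real,'n) vec \<Rightarrow> ((real,'n) vec,'n) vec"
    and U :: "(real,'n) vec \<Rightarrow> real"
    and KP KI KD :: "((real,'m::{finite,linorder}) vec,'m) vec"
    and \<kappa> :: "(real,'m) vec"
  assumes M_C2: "C2 M" and M_pd: "\<And>q. pos_def (M q)" and U_C2: "C2 U"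
    and D_psd: "\<And>q p. psd (D q p)" and KP_psd: "psd KP" and KI_pd: "pos_def KI" and KD_psd: "psd KD"
    and sol: "cl_solution M D U KP KI KD \<kappa> T q p q' p'" and t: "t \<in> {0..T}"
  shows "Vfun M U KD KI \<kappa> (q t) (p t) \<le> Vfun M U KD KI \<kappa> (q 0) (p 0)"
proof -
  let ?V = "\<lambda>s. Vfun M U KD KI \<kappa> (q s) (p s)"
  have dV: "\<And>s. s \<in> {0..T} \<Longrightarrow> \<exists>d. (?V has_real_derivative d) (at s within {0..T}) \<and> d \<le> 0"
    using Vfun_deriv[OF M_C2 M_pd U_C2 D_psd KP_psd KI_pd KD_psd sol] by blast
  have cont: "continuous_on {0..T} ?V"
  proof (rule continuous_on_eq_continuous_within[THEN iffD2], intro ballI)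
    fix s assume "s \<in> {0..T}"
    then obtain d where "(?V has_real_derivative d) (at s within {0..T})" using dV by blast
    then show "continuous (at s within {0..T}) ?V"
      unfolding has_field_derivative_def using has_derivative_continuous by blast
  qed
  show ?thesis
  proof (rule DERIV_nonpos_imp_decreasing_open[of 0 t ?V])
    show "0 \<le> t" using t by simp
    show "continuous_on {0..t} ?V" using t by (intro continuous_on_subset[OF cont]) auto
    fix x assume x: "0 < x" "x < t"
    then have xi: "x \<in> interior {0..T}" using t by simp
    then have xT: "x \<in> {0..T}" using interior_subset by blast
    obtain d where "(?V has_real_derivative d) (at x within {0..T})" "d \<le> 0" using dV[OF xT] by blast
    then show "\<exists>y. (?V has_real_derivative y) (at x) \<and> y \<le> 0"
      using at_within_interior[OF xi] by metis
  qed
qed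

lemma part2:
  fixes M :: "(real,'n::{finite,linorder}) vec \<Rightarrow> ((real,'n) vec,'n) vec"
    and D :: "(real,'n) vec \<Rightarrow> (real,'n) vec \<Rightarrow> ((real,'n) vec,'n) vec"
    and U :: "(real,'n) vec \<Rightarrow> real"
    and KP KI KD :: "((real,'m::{finite,linorder}) vec,'m) vec"
    and qs :: "(real,'n) vec"
  assumes mn: "CARD('m) \<le> CARD('n)"
    and M_C2: "C2 M" and M_pd: "\<And>q. pos_def (M q)"
    and D_psd: "\<And>q p. psd (D q p)"
    and U_C2: "C2 U"
    and qs_eq: "Gperp_zero TYPE('m) (grad U qs)"
    and KI_pd: "pos_def KI" and KP_psd: "psd KP" and KD_psd: "psd KD"
    and Hpd: "pos_def (hess U qs + (Gmat :: ((real,'m) vec,'n) vec) ** KI ** transpose Gmat)"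
  shows "\<forall>\<epsilon>>0. \<exists>\<delta>>0. \<forall>T q p q' p'.
             cl_solution M D U KP KI KD (kappa KI U qs) T q p q' p' \<longrightarrow> norm (q 0 - qs, p 0) < \<delta> \<longrightarrow>
             (\<forall>t\<in>{0..T}. norm (q t - qs, p t) < \<epsilon>)"
proof (intro allI impI)
  fix \<epsilon> :: real assume \<epsilon>: "\<epsilon> > 0"
  define \<kappa> where "\<kappa> = kappa KI U qs"
  define G where "G = (Gmat :: ((real,'m) vec,'n) vec)"
  let ?g = "grad U qs"
  have KIinv: "KI ** matrix_inv KI = mat 1" using inv_props pd_invertible[OF KI_pd] by blast
  have k: "KI *v (transpose G *v qs + \<kappa>) = - (transpose G *v ?g)"
  proof -
    have "transpose G *v qs + \<kappa> = - (matrix_inv KI *v (transpose G *v ?g))"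
      unfolding \<kappa>_def kappa_def G_def by simp
    then show ?thesis
      by (simp add: matrix_vector_mul_assoc matrix_mul_assoc KIinv)
  qed
  have GG: "G *v (transpose G *v ?g) = ?g" using GGt[OF qs_eq mn] by (simp add: G_def)
  have crit: "(Gmat :: ((real,'m) vec,'n) vec) *v (KI *v (transpose Gmat *v qs + \<kappa>)) + grad U qs = 0"
    using k GG by (simp add: G_def)
  obtain r where r: "r > 0" "\<And>q. 0 < norm (q - qs) \<and> norm (q - qs) \<le> r \<Longrightarrow> Ud KI \<kappa> U qs < Ud KI \<kappa> U q"
    using Ud_strict_min[OF U_C2 KI_pd Hpd crit] by blast
  define V2 where "V2 x = Vfun M U KD KI \<kappa> (fst x) (snd x)" for x :: "(real,'n) vec \<times> (real,'n) vec"
  define x0 where "x0 = (qs, 0 :: (real,'n) vec)"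
  have V0: "V2 x0 = Ud KI \<kappa> U qs"
    by (simp add: V2_def x0_def Vfun_Ud yout_def)
  have posV: "V2 x0 < V2 x" if x: "0 < norm (x - x0)" "norm (x - x0) \<le> r" for x
  proof -
    obtain a b where ab: "x = (a, b)" by (cases x)
    have nx: "norm (x - x0) = norm (a - qs, b)" by (simp add: ab x0_def)
    have kin: "b \<bullet> (matrix_inv (M a) *v b) \<ge> 0" using Minv_pd[OF M_C2 M_pd, of a]
      unfolding pos_def_def by (metis inner_zero_left order_le_less)
    have yy: "(yout M a b :: (real,'m) vec) \<bullet> (KD *v yout M a b) \<ge> 0" using KD_psd psd_def by blast
    have Vx: "V2 x = Ud KI \<kappa> U a + 1/2 * (b \<bullet> (matrix_inv (M a) *v b))
        + 1/2 * ((yout M a b :: (real,'m) vec) \<bullet> (KD *v yout M a b))"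
      by (simp add: V2_def ab Vfun_Ud)
    show ?thesis
    proof (cases "b = 0")
      case True
      then have "0 < norm (a - qs)" "norm (a - qs) \<le> r" using x nx by auto
      then have "Ud KI \<kappa> U qs < Ud KI \<kappa> U a" using r(2) by blast
      then show ?thesis using Vx V0 kin yy by simp
    next
      case False
      have kin': "b \<bullet> (matrix_inv (M a) *v b) > 0" using Minv_pd[OF M_C2 M_pd, of a] False
        unfolding pos_def_def by blast
      have "Ud KI \<kappa> U qs \<le> Ud KI \<kappa> U a"
      proof (cases "a = qs")
        case True then show ?thesis by simp
      next
        case False
        have "norm (a - qs) \<le> norm (a - qs, b)" by (rule norm_fst_le)
        then have "0 < norm (a - qs) \<and> norm (a - qs) \<le> r" using False x nx by auto
        then show ?thesis using r(2) by (simp add: less_imp_le)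
      qed
      then show ?thesis using Vx V0 kin' yy by simp
    qed
  qed
  define e where "e = min (\<epsilon>/2) r"
  have e: "e > 0" "e < \<epsilon>" "e \<le> r" using \<epsilon> r(1) by (auto simp: e_def)
  have Vc: "continuous_on UNIV V2"
    using Vfun_cont[OF M_C2 M_pd U_C2, of KD KI \<kappa>] unfolding V2_def[abs_def] by simp
  have comp: "compact (sphere x0 e)" by simp
  have ne: "sphere x0 e \<noteq> {}" using e(1) by simp
  obtain xm where xm: "xm \<in> sphere x0 e" and xmin: "\<forall>y\<in>sphere x0 e. V2 xm \<le> V2 y"
    using continuous_attains_inf[OF comp ne continuous_on_subset[OF Vc]] by blast
  have "norm (xm - x0) = e" using xm by (simp add: dist_norm norm_minus_commute)
  then have mgt: "V2 x0 < V2 xm" using posV[of xm] e by simp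
  have "isCont V2 x0" using Vc continuous_on_eq_continuous_at open_UNIV by blast
  then obtain \<delta> where \<delta>: "\<delta> > 0" "\<And>x. dist x x0 < \<delta> \<Longrightarrow> dist (V2 x) (V2 x0) < V2 xm - V2 x0"
    using mgt unfolding continuous_at_eps_delta by (meson diff_gt_0_iff_gt)
  show "\<exists>\<delta>>0. \<forall>T q p q' p'.
             cl_solution M D U KP KI KD (kappa KI U qs) T q p q' p' \<longrightarrow> norm (q 0 - qs, p 0) < \<delta> \<longrightarrow>
             (\<forall>t\<in>{0..T}. norm (q t - qs, p t) < \<epsilon>)"
  proof (intro exI[of _ "min \<delta> e"] conjI allI impI ballI)
    show "min \<delta> e > 0" using \<delta>(1) e(1) by simp
    fix T q p q' p' t
    assume sol: "cl_solution M D U KP KI KD (kappa KI U qs) T q p q' p'"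
      and init: "norm (q 0 - qs, p 0) < min \<delta> e" and t: "t \<in> {0..T}"
    define \<phi> where "\<phi> s = norm ((q s, p s) - x0)" for s
    have \<phi>n: "\<phi> s = norm (q s - qs, p s)" for s by (simp add: \<phi>_def x0_def)
    have T: "T \<ge> 0" using t by simp
    have V0s: "V2 (q 0, p 0) < V2 xm"
    proof -
      have "dist (q 0, p 0) x0 < \<delta>" using init \<phi>n[of 0] by (simp add: dist_norm \<phi>_def)
      then have "dist (V2 (q 0, p 0)) (V2 x0) < V2 xm - V2 x0" using \<delta>(2) by blast
      then show ?thesis by (simp add: dist_real_def)
    qed
    from sol have H: "\<forall>s\<in>{0..T}. (q has_vector_derivative q' s) (at s within {0..T}) \<and>
                       (p has_vector_derivative p' s) (at s within {0..T})"
      unfolding cl_solution_def by blast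
    have cq: "continuous_on {0..T} q" "continuous_on {0..T} p"
      using H has_vector_derivative_continuous continuous_on_eq_continuous_within by blast+
    have c\<phi>: "continuous_on {0..t} \<phi>"
    proof -
      have "continuous_on {0..T} \<phi>" unfolding \<phi>_def by (intro continuous_intros cq)
      then show ?thesis by (rule continuous_on_subset) (use t in auto)
    qed
    show "norm (q t - qs, p t) < \<epsilon>"
    proof (rule ccontr)
      assume "\<not> norm (q t - qs, p t) < \<epsilon>"
      then have "\<phi> t \<ge> e" using e \<phi>n[of t] by simp
      moreover have "\<phi> 0 \<le> e" using init \<phi>n[of 0] by simp
      ultimately obtain s where s: "0 \<le> s" "s \<le> t" "\<phi> s = e"
        using IVT'[of \<phi> 0 e t] c\<phi> t by auto
      have sT: "s \<in> {0..T}" using s t by simp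
      have "(q s, p s) \<in> sphere x0 e" using s(3) by (simp add: \<phi>_def dist_norm norm_minus_commute)
      then have "V2 xm \<le> V2 (q s, p s)" using xmin by blast
      moreover have "V2 (q s, p s) \<le> V2 (q 0, p 0)"
        unfolding V2_def \<kappa>_def
        using Vfun_decr[OF M_C2 M_pd U_C2 D_psd KP_psd KI_pd KD_psd sol sT] by simp
      ultimately show False using V0s by simp
    qed
  qed
qed

theorem proposition1:
  fixes M :: "(real,'n::{finite,linorder}) vec \<Rightarrow> ((real,'n) vec,'n) vec"
    and D :: "(real,'n) vec \<Rightarrow> (real,'n) vec \<Rightarrow> ((real,'n) vec,'n) vec"
    and U :: "(real,'n) vec \<Rightarrow> real"
    and KP KI KD :: "((real,'m::{finite,linorder}) vec,'m) vec"
    and qs :: "(real,'n) vec"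
  assumes mn: "CARD('m) \<le> CARD('n)"
    and M_C2: "C2 M" and M_pd: "\<And>q. pos_def (M q)"
    and D_C2: "C2 (\<lambda>x. D (fst x) (snd x))" and D_psd: "\<And>q p. psd (D q p)"
    and U_C2: "C2 U" and U_nonneg: "\<And>q. U q \<ge> 0"
    and qs_eq: "Gperp_zero TYPE('m) (grad U qs)"
    and KI_pd: "pos_def KI" and KP_psd: "psd KP" and KD_psd: "psd KD"
  shows
    "(\<forall>T>0. cl_solution M D U KP KI KD (kappa KI U qs) T (\<lambda>_. qs) (\<lambda>_. 0) (\<lambda>_. 0) (\<lambda>_. 0))
     \<and> (pos_def (hess U qs + (Gmat :: ((real,'m) vec,'n) vec) ** KI ** transpose Gmat) \<longrightarrow>
          (\<forall>\<epsilon>>0. \<exists>\<delta>>0. \<forall>T q p q' p'.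
             cl_solution M D U KP KI KD (kappa KI U qs) T q p q' p' \<longrightarrow> norm (q 0 - qs, p 0) < \<delta> \<longrightarrow>
             (\<forall>t\<in>{0..T}. norm (q t - qs, p t) < \<epsilon>)))
     \<and> (\<forall>T q p q' p' t.
          cl_solution M D U KP KI KD (kappa KI U qs) T q p q' p' \<longrightarrow> t \<in> {0..T} \<longrightarrow>
            q' t = matrix_inv (M (q t)) ** Md M KD (q t)
                     *v grad (\<lambda>pp. Hd M KD KI (kappa KI U qs) U (q t) pp) (p t)
          \<and> p' t = - (Md M KD (q t) ** matrix_inv (M (q t))
                       *v grad (\<lambda>qq. Hd M KD KI (kappa KI U qs) U qq (p t)) (q t))
                   + (Jm M KD (q t) (p t) - Ddm M D KP KD (q t) (p t))
                       *v grad (\<lambda>pp. Hd M KD KI (kappa KI U qs) U (q t) pp) (p t))"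
  proof -
  have P1: "\<forall>T>0. cl_solution M D U KP KI KD (kappa KI U qs) T (\<lambda>_. qs) (\<lambda>_. 0) (\<lambda>_. 0) (\<lambda>_. 0)"
    by (rule part1[OF mn M_C2 M_pd qs_eq KI_pd])
  have P2: "pos_def (hess U qs + (Gmat :: ((real,'m) vec,'n) vec) ** KI ** transpose Gmat) \<longrightarrow>
          (\<forall>\<epsilon>>0. \<exists>\<delta>>0. \<forall>T q p q' p'.
             cl_solution M D U KP KI KD (kappa KI U qs) T q p q' p' \<longrightarrow> norm (q 0 - qs, p 0) < \<delta> \<longrightarrow>
             (\<forall>t\<in>{0..T}. norm (q t - qs, p t) < \<epsilon>))"
  proof (rule impI)
    assume Hpd: "pos_def (hess U qs + (Gmat :: ((real,'m) vec,'n) vec) ** KI ** transpose Gmat)"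
    show "\<forall>\<epsilon>>0. \<exists>\<delta>>0. \<forall>T q p q' p'.
             cl_solution M D U KP KI KD (kappa KI U qs) T q p q' p' \<longrightarrow> norm (q 0 - qs, p 0) < \<delta> \<longrightarrow>
             (\<forall>t\<in>{0..T}. norm (q t - qs, p t) < \<epsilon>)"
      by (rule part2[OF mn M_C2 M_pd D_psd U_C2 qs_eq KI_pd KP_psd KD_psd Hpd])
  qed
  have P3: "\<forall>T q p q' p' t.
          cl_solution M D U KP KI KD (kappa KI U qs) T q p q' p' \<longrightarrow> t \<in> {0..T} \<longrightarrow>
            q' t = matrix_inv (M (q t)) ** Md M KD (q t)
                     *v grad (\<lambda>pp. Hd M KD KI (kappa KI U qs) U (q t) pp) (p t)
          \<and> p' t = - (Md M KD (q t) ** matrix_inv (M (q t))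
                       *v grad (\<lambda>qq. Hd M KD KI (kappa KI U qs) U qq (p t)) (q t))
                   + (Jm M KD (q t) (p t) - Ddm M D KP KD (q t) (p t))
                       *v grad (\<lambda>pp. Hd M KD KI (kappa KI U qs) U (q t) pp) (p t)"
    by (rule part3[OF M_C2 M_pd U_C2 KI_pd KD_psd])
  show ?thesis by (rule conjI[OF P1 conjI[OF P2 P3]])
qed

end
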